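(* For $\phi=Q+iP$ with $P,Q\in L^2(\mathbb{T};\mathbb{R})$, let $\Psi_\lambda(x)$ be the $2\times2$ matrix solution of $$\Big(\begin{bmatrix}0&1\\-1&0\end{bmatrix}\frac{\partial}{\partial x}-\begin{bmatrix}P&-Q\\-Q&-P\end{bmatrix}-\frac\lambda2\begin{bmatrix}1&0\\0&1\end{bmatrix}\Big)\Psi_\lambda(x)=0,\qquad \Psi_\lambda(0)=I,$$ and let $\Delta_\phi(\lambda)=\operatorname{trace}\Psi_\lambda(2\pi)$. Then for all $0\le k<\infty$ and all $N<\infty$, the map $\phi\mapsto(\Delta^{(j)}_\phi(0))_{j=0}^k$ is a Lipschitz function from $\Omega_N$ to $\ell^2$. Moreover, $\phi\mapsto\Delta_\phi(\lambda)$ is continuous from the norm topology to the topology of uniform convergence (in $\lambda$) on compact sets.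
   Context: $\mathbb{T}=\mathbb{R}/2\pi\mathbb{Z}$; $\Omega_N=\{\phi\in L^2(\mathbb{T};\mathbb{C}):\int_{\mathbb{T}}|\phi|^2\frac{dx}{2\pi}\le N\}$ with the $L^2$ norm. $\Delta^{(j)}_\phi$ denotes the $j$-th derivative in $\lambda$. *)

theory Defs
  imports "HOL-Analysis.Analysis"
begin

text \<open>Elements of L^2(T;C), represented by functions on [0, 2 pi]
  (equivalently 2 pi-periodic functions), up to the L^2 seminorm.\<close>
definition L2T :: "(real \<Rightarrow> complex) \<Rightarrow> bool" where
  "L2T \<phi> \<longleftrightarrow> \<phi> \<in> borel_measurable (lebesgue_on {0..2*pi})
     \<and> integrable (lebesgue_on {0..2*pi}) (\<lambda>x. (cmod (\<phi> x))^2)"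

definition L2norm :: "(real \<Rightarrow> complex) \<Rightarrow> real" where
  "L2norm \<phi> = sqrt (integral\<^sup>L (lebesgue_on {0..2*pi}) (\<lambda>x. (cmod (\<phi> x))^2) / (2*pi))"

definition Omega :: "real \<Rightarrow> (real \<Rightarrow> complex) set" where
  "Omega N = {\<phi>. L2T \<phi> \<and> integral\<^sup>L (lebesgue_on {0..2*pi}) (\<lambda>x. (cmod (\<phi> x))^2) / (2*pi) \<le> N}"

definition Jmat :: "complex^2^2" where
  "Jmat = vector [vector [0, 1], vector [-1, 0]]"

definition Vmat :: "(real \<Rightarrow> complex) \<Rightarrow> real \<Rightarrow> complex^2^2" where
  "Vmat \<phi> x = (let P = complex_of_real (Im (\<phi> x)); Q = complex_of_real (Re (\<phi> x)) in
      vector [vector [P, -Q], vector [-Q, -P]])"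

text \<open>Psi solves J Psi' - V Psi - (lambda/2) Psi = 0, Psi(0) = I on [0, 2 pi], in the
  (Caratheodory) integral sense: Psi continuous and
  J (Psi x - I) = integral_0^x (V t + lambda/2 I) Psi t dt.\<close>
definition is_Psi :: "(real \<Rightarrow> complex) \<Rightarrow> complex \<Rightarrow> (real \<Rightarrow> complex^2^2) \<Rightarrow> bool" where
  "is_Psi \<phi> lam \<Psi> \<longleftrightarrow> continuous_on {0..2*pi} \<Psi> \<and>
     (\<forall>x\<in>{0..2*pi}.
        (\<lambda>t. (Vmat \<phi> t + mat (lam/2)) ** \<Psi> t) integrable_on {0..x} \<and>
        Jmat ** (\<Psi> x - mat 1) = integral {0..x} (\<lambda>t. (Vmat \<phi> t + mat (lam/2)) ** \<Psi> t))"

definition Delta :: "(real \<Rightarrow> complex) \<Rightarrow> complex \<Rightarrow> complex" where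
  "Delta \<phi> lam = (THE d. \<exists>\<Psi>. is_Psi \<phi> lam \<Psi> \<and> d = trace (\<Psi> (2*pi)))"

end

theory Submission
  imports Defs "HOL-Complex_Analysis.Complex_Analysis"
begin


type_synonym M2 = "complex^2^2"

lemma mat_ext2: "(A::M2) = B \<longleftrightarrow> A$1$1 = B$1$1 \<and> A$1$2=B$1$2 \<and> A$2$1=B$2$1 \<and> A$2$2=B$2$2"
  by (auto simp: vec_eq_iff forall_2)

lemma mmult_comp: "((A::M2) ** B)$i$j = A$i$1*B$1$j + A$i$2*B$2$j"
  by (simp add: matrix_matrix_mult_def sum_2)

lemma J_J: "Jmat ** Jmat = - mat 1"
  by (simp add: mat_ext2 mmult_comp Jmat_def mat_def)

lemma bilin_mm: "bilinear (\<lambda>(Y::M2) (M::M2). M ** Y)"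
  unfolding bilinear_def linear_iff
  by (auto simp: mat_ext2 mmult_comp algebra_simps)

definition Bm :: real where
  "Bm = (SOME B. B > 0 \<and> (\<forall>Y M. norm ((M::M2) ** (Y::M2)) \<le> B * norm Y * norm M))"

lemma Bm: "Bm > 0" "norm ((M::M2) ** (Y::M2)) \<le> Bm * norm M * norm Y"
proof -
  have "\<exists>B. B > 0 \<and> (\<forall>Y M. norm ((M::M2) ** (Y::M2)) \<le> B * norm Y * norm M)"
    using bilinear_bounded_pos[OF bilin_mm] by auto
  then have "Bm > 0 \<and> (\<forall>Y M. norm ((M::M2) ** (Y::M2)) \<le> Bm * norm Y * norm M)"
    unfolding Bm_def by (rule someI_ex)
  then have "norm ((M::M2) ** (Y::M2)) \<le> Bm * norm Y * norm M" by blast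
  then show "norm ((M::M2) ** (Y::M2)) \<le> Bm * norm M * norm Y" by (simp add: mult_ac)
  show "Bm > 0" using \<open>Bm > 0 \<and> _\<close> by blast
qed

lemma bl_lmult: "bounded_linear (\<lambda>Y::M2. (M::M2) ** Y)"
  using bounded_bilinear.bounded_linear_left[OF bilin_mm[unfolded bilinear_conv_bounded_bilinear]]
  by simp

lemma bl_rmult: "bounded_linear (\<lambda>M::M2. M ** (Y::M2))"
  using bounded_bilinear.bounded_linear_right[OF bilin_mm[unfolded bilinear_conv_bounded_bilinear]]
  by simp

lemma matrix_sub_ldistrib2: "(A::M2) ** ((B::M2) - C) = A ** B - A ** C"
  by (simp add: mat_ext2 mmult_comp algebra_simps)
lemma matrix_sub_rdistrib2: "((A::M2) - B) ** (C::M2) = A ** C - B ** C"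
  by (simp add: mat_ext2 mmult_comp algebra_simps)
lemma matrix_add_rdistrib2: "((A::M2) + B) ** (C::M2) = A ** C + B ** C"
  by (simp add: mat_ext2 mmult_comp algebra_simps)
lemma matrix_neg2: "(- (A::M2)) ** (C::M2) = - (A ** C)"
  by (simp add: mat_ext2 mmult_comp algebra_simps)
lemma matrix_zero2: "(A::M2) ** (0::M2) = 0" "(0::M2) ** (A::M2) = 0"
  by (simp_all add: mat_ext2 mmult_comp)

definition csm :: "complex \<Rightarrow> M2 \<Rightarrow> M2" where
  "csm c A = (\<chi> i j. c * A$i$j)"

lemma csm_comp[simp]: "csm c A $ i $ j = c * A$i$j"
  by (simp add: csm_def)

lemma csm_add: "csm c (A + B) = csm c A + csm c B"
  by (simp add: mat_ext2 algebra_simps)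
lemma csm_diff: "csm c (A - B) = csm c A - csm c B"
  by (simp add: mat_ext2 algebra_simps)
lemma csm_csm: "csm a (csm b A) = csm (a*b) A"
  by (simp add: mat_ext2 algebra_simps)
lemma csm_zero[simp]: "csm c 0 = 0"
  by (simp add: mat_ext2)
lemma csm_one[simp]: "csm 1 A = A"
  by (simp add: mat_ext2)
lemma csm_mult_right: "(A::M2) ** csm c B = csm c (A ** B)"
  by (simp add: mat_ext2 mmult_comp algebra_simps)
lemma mat_mult_left: "mat c ** (A::M2) = csm c A"
  by (simp add: mat_ext2 mmult_comp mat_def)
lemma csm_sum: "csm c (sum f S) = (\<Sum>x\<in>S. csm c (f x))"
  by (induction S rule: infinite_finite_induct) (auto simp: csm_add)
lemma mmult_sum: "(A::M2) ** (sum f S :: M2) = (\<Sum>x\<in>S. A ** f x)"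
  by (induction S rule: infinite_finite_induct) (auto simp: matrix_add_ldistrib matrix_zero2)
lemma bl_csm: "bounded_linear (csm c)"
proof -
  have "linear (csm c)"
    unfolding linear_iff by (auto simp: mat_ext2 algebra_simps)
  then show ?thesis using linear_conv_bounded_linear by blast
qed
lemma trace_csm: "trace (csm c A) = c * trace A"
  by (simp add: trace_def sum_2 algebra_simps)
lemma trace_sum: "trace (sum f S) = (\<Sum>x\<in>S. trace (f x))"
  by (induction S rule: infinite_finite_induct) (auto simp: trace_add trace_def sum.distrib)

lemma trace_diff2: "trace ((A::M2) - B) = trace A - trace B"
  by (simp add: trace_def sum_2)

lemma norm_trace: "cmod (trace (A::M2)) \<le> 2 * norm A"
proof -
  have "cmod (trace A) \<le> cmod (A$1$1) + cmod (A$2$2)"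
    by (simp add: trace_def sum_2 norm_triangle_ineq)
  also have "\<dots> \<le> norm A + norm A"
  proof -
    have c: "cmod (A$i$j) \<le> norm A" for i j
      by (meson Finite_Cartesian_Product.norm_nth_le order_trans)
    show ?thesis using c[of 1 1] c[of 2 2] by linarith
  qed
  finally show ?thesis by simp
qed

lemma J_sol: "Jmat ** (P - mat 1) = G \<Longrightarrow> P = mat 1 - Jmat ** G"
proof -
  assume h: "Jmat ** (P - mat 1) = G"
  have "Jmat ** G = (Jmat ** Jmat) ** (P - mat 1)" using h[symmetric] by (simp add: matrix_mul_assoc)
  also have "\<dots> = - (P - mat 1)" by (simp add: J_J matrix_neg2)
  finally show ?thesis by simp
qed

lemma J_sol': "P = mat 1 - Jmat ** G \<Longrightarrow> Jmat ** (P - mat 1) = G"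
proof -
  assume h: "P = mat 1 - Jmat ** G"
  then have "Jmat ** (P - mat 1) = Jmat ** (- (Jmat ** G))"
    by simp
  also have "\<dots> = - ((Jmat ** Jmat) ** G)"
    by (simp add: mat_ext2 mmult_comp algebra_simps)
  also have "\<dots> = G" by (simp add: J_J matrix_neg2 matrix_mul_lid)
  finally show ?thesis .
qed

definition fV :: "complex \<Rightarrow> M2" where
  "fV z = (let P = complex_of_real (Im z); Q = complex_of_real (Re z) in
      vector [vector [P, -Q], vector [-Q, -P]])"

lemma Vmat_fV: "Vmat \<phi> x = fV (\<phi> x)"
  by (simp add: Vmat_def fV_def)

lemma fV_comp: "fV z $1$1 = of_real (Im z)" "fV z $1$2 = - of_real (Re z)"
  "fV z $2$1 = - of_real (Re z)" "fV z $2$2 = - of_real (Im z)"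
  by (simp_all add: fV_def Let_def)

lemma fV_diff: "fV (a - b) = fV a - fV b"
  by (simp add: mat_ext2 fV_comp)

lemma fV_linear: "bounded_linear fV"
proof -
  have "fV (c *\<^sub>R x) = c *\<^sub>R fV x" for c x
    by (simp add: vec_eq_iff forall_2 fV_comp) (simp add: scaleR_conv_of_real)
  moreover have "fV (x + y) = fV x + fV y" for x y
    by (simp add: vec_eq_iff forall_2 fV_comp)
  ultimately have "linear fV"
    unfolding linear_iff by auto
  then show ?thesis using linear_conv_bounded_linear by blast
qed

lemma norm_fV: "norm (fV z) = sqrt 2 * cmod z"
proof -
  have "norm (fV z) = sqrt (2 * (Re z ^2 + Im z^2))"
    by (simp add: norm_vec_def L2_set_def sum_2 fV_comp norm_minus_cancel)
  also have "\<dots> = sqrt 2 * sqrt (Re z ^2 + Im z^2)" by (rule real_sqrt_mult)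
  finally show ?thesis by (simp add: cmod_def)
qed

lemma norm_mat: "norm (mat c :: M2) = sqrt 2 * cmod c"
  by (simp add: norm_vec_def L2_set_def sum_2 mat_def real_sqrt_mult)



lemma le_1_sq: "(x::real) \<le> 1 + x^2"
proof (cases "x \<le> 1")
  case True then show ?thesis by (smt (verit) zero_le_power2)
next
  case False
  then have "x * 1 \<le> x * x" by (intro mult_left_mono) auto
  then show ?thesis by (simp add: power2_eq_square)
qed

definition good :: "(real \<Rightarrow> M2) \<Rightarrow> bool" where
  "good W \<longleftrightarrow> W \<in> borel_measurable (lebesgue_on {0..2*pi}) \<and>
     (\<lambda>t. norm (W t)^2) integrable_on {0..2*pi}"

definition om :: "(real \<Rightarrow> M2) \<Rightarrow> real" where
  "om W = integral {0..2*pi} (\<lambda>t. norm (W t)^2)"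

lemma om_nonneg: "good W \<Longrightarrow> 0 \<le> om W"
  unfolding om_def good_def by (intro integral_nonneg) auto

lemma good_absint: assumes "good W" shows "W absolutely_integrable_on {0..2*pi}"
proof (rule measurable_bounded_by_integrable_imp_absolutely_integrable[where g = "\<lambda>t. 1 + norm (W t)^2"])
  show "W \<in> borel_measurable (lebesgue_on {0..2 * pi})" using assms good_def by auto
  show "(\<lambda>t. 1 + (norm (W t))\<^sup>2) integrable_on {0..2 * pi}"
    using assms good_def by (intro integrable_add) auto
  show "norm (W x) \<le> 1 + (norm (W x))\<^sup>2" for x by (rule le_1_sq)
qed auto

lemma normW_absint: "good W \<Longrightarrow> (\<lambda>t. norm (W t)) absolutely_integrable_on {0..2*pi}"
  using absolutely_integrable_norm[OF good_absint] by (simp add: o_def)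

lemma cont_meas: "continuous_on {0..2*pi} Y \<Longrightarrow> Y \<in> borel_measurable (lebesgue_on {0..2*pi})"
  by (rule continuous_imp_measurable_on_sets_lebesgue) auto

lemma cont_bounded: "continuous_on {0..2*pi} Y \<Longrightarrow> bounded (Y ` {0..2*pi})"
  by (intro compact_imp_bounded compact_continuous_image) auto

lemma prod_absint:
  assumes "good W" "continuous_on {0..2*pi} (Y::real \<Rightarrow> M2)"
  shows "(\<lambda>t. W t ** Y t) absolutely_integrable_on {0..2*pi}"
  using absolutely_integrable_bounded_measurable_product[OF bilin_mm cont_meas[OF assms(2)] _
      cont_bounded[OF assms(2)] good_absint[OF assms(1)]]
  by simp

lemma prod_int:
  assumes "good W" "continuous_on {0..2*pi} (Y::real \<Rightarrow> M2)" "x \<le> 2*pi"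
  shows "(\<lambda>t. W t ** Y t) integrable_on {0..x}"
  using absolutely_integrable_on_subinterval[OF prod_absint[OF assms(1,2)], of 0 x] assms(3)
  by (auto simp: absolutely_integrable_on_def)

lemma prod_real_absint:
  assumes "good W" "continuous_on {0..2*pi} (Y::real \<Rightarrow> M2)"
  shows "(\<lambda>t. norm (W t) * norm (Y t)) absolutely_integrable_on {0..2*pi}"
proof -
  have c: "continuous_on {0..2*pi} (\<lambda>t. norm (Y t))" using assms(2) by (intro continuous_intros)
  have "(\<lambda>t. norm (Y t) * norm (W t)) absolutely_integrable_on {0..2*pi}"
    by (rule absolutely_integrable_bounded_measurable_product_real[OF cont_meas[OF c] _
        cont_bounded[OF c] normW_absint[OF assms(1)]]) auto
  then show ?thesis by (simp add: mult.commute)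
qed


lemma CS_int:
  fixes f g :: "real \<Rightarrow> real"
  assumes f2: "(\<lambda>t. f t^2) integrable_on S" and g2: "(\<lambda>t. g t^2) integrable_on S"
    and fg: "(\<lambda>t. f t * g t) integrable_on S"
  shows "(integral S (\<lambda>t. f t * g t))^2 \<le> integral S (\<lambda>t. f t^2) * integral S (\<lambda>t. g t^2)"
proof -
  define A where "A = integral S (\<lambda>t. f t^2)"
  define B where "B = integral S (\<lambda>t. g t^2)"
  define C where "C = integral S (\<lambda>t. f t * g t)"
  have q: "0 \<le> s^2 * A - 2 * s * C + B" for s
  proof -
    have h1: "((\<lambda>t. s^2 * f t^2) has_integral s^2 * A) S"
      unfolding A_def by (rule has_integral_mult_right[OF integrable_integral[OF f2]])
    have h2: "((\<lambda>t. 2 * s * (f t * g t)) has_integral 2 * s * C) S"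
      unfolding C_def by (rule has_integral_mult_right[OF integrable_integral[OF fg]])
    have h3: "((\<lambda>t. g t^2) has_integral B) S"
      unfolding B_def by (rule integrable_integral[OF g2])
    have h: "((\<lambda>t. s^2 * f t^2 - 2 * s * (f t * g t) + g t^2) has_integral (s^2 * A - 2 * s * C + B)) S"
      by (rule has_integral_add[OF has_integral_diff[OF h1 h2] h3])
    have nn: "0 \<le> s^2 * f t^2 - 2 * s * (f t * g t) + g t^2" for t
    proof -
      have "0 \<le> (s * f t - g t)^2" by simp
      also have "(s * f t - g t)^2 = s^2 * f t^2 - 2 * s * (f t * g t) + g t^2"
        by (simp add: power2_eq_square algebra_simps)
      finally show ?thesis .
    qed
    show ?thesis using has_integral_nonneg[OF h nn] .
  qed
  have A0: "0 \<le> A" unfolding A_def by (intro integral_nonneg f2) auto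
  have "C^2 \<le> A * B"
  proof (cases "A = 0")
    case True
    have "C = 0"
    proof (rule ccontr)
      assume C0: "C \<noteq> 0"
      have "0 \<le> ((B+1)/(2*C))^2 * A - 2 * ((B+1)/(2*C)) * C + B" using q by blast
      moreover have "2 * ((B+1)/(2*C)) * C = B + 1" using C0 by simp
      ultimately show False using True by simp
    qed
    then show ?thesis using True by simp
  next
    case False
    then have Ap: "A > 0" using A0 by auto
    have "0 \<le> (C/A)^2 * A - 2 * (C/A) * C + B" using q by blast
    then have "0 \<le> A * ((C/A)^2 * A - 2 * (C/A) * C + B)" using Ap by simp
    also have "A * ((C/A)^2 * A - 2 * (C/A) * C + B) = A * B - C^2"
      using False by (simp add: power2_eq_square field_simps)
    finally show ?thesis by simp
  qed
  then show ?thesis by (simp add: A_def B_def C_def)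
qed

lemma gronwall:
  fixes u :: "real \<Rightarrow> real"
  assumes cu: "continuous_on {0..X} u" and a: "0 \<le> a" and K: "0 \<le> K"
    and le: "\<And>x. x \<in> {0..X} \<Longrightarrow> u x \<le> a + K * integral {0..x} u"
    and x: "x \<in> {0..X}"
  shows "u x \<le> a * exp (K * x)"
proof -
  define h where "h = (\<lambda>y. exp (-(K*y)) * (a + K * integral {0..y} u))"
  have hd: "(h has_real_derivative exp (-(K*y)) * (-K) * (a + K * integral {0..y} u) + exp (-(K*y)) * (K * u y))
       (at y within {0..X})" if "y \<in> {0..X}" for y
  proof -
    have dI: "((\<lambda>x. integral {0..x} u) has_real_derivative u y) (at y within {0..X})"
      by (rule integral_has_real_derivative[OF cu that])
    show ?thesis unfolding h_def
      by (rule derivative_eq_intros dI refl)+ (simp add: algebra_simps)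
  qed
  have "h x \<le> h 0"
  proof (rule DERIV_nonpos_imp_decreasing_open[of 0 x h])
    show "0 \<le> x" using x by auto
    show "continuous_on {0..x} h"
    proof -
      have "continuous_on {0..X} h" unfolding h_def
        by (intro continuous_intros indefinite_integral_continuous_1 integrable_continuous_real cu)
      then show ?thesis by (rule continuous_on_subset) (use x in auto)
    qed
    fix y assume y: "0 < y" "y < x"
    then have yX: "y \<in> {0..X}" using x by auto
    have "(h has_real_derivative exp (-(K*y)) * (-K) * (a + K * integral {0..y} u) + exp (-(K*y)) * (K * u y))
       (at y)"
      using hd[OF yX] y x
      by (subst (asm) at_within_interior[of y]) (auto simp: interior_atLeastAtMost_real)
    moreover have "exp (-(K*y)) * (-K) * (a + K * integral {0..y} u) + exp (-(K*y)) * (K * u y) \<le> 0"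
    proof -
      have "K * u y \<le> K * (a + K * integral {0..y} u)"
        using le[OF yX] K by (intro mult_left_mono) auto
      then have "exp (-(K*y)) * (K * u y) \<le> exp (-(K*y)) * (K * (a + K * integral {0..y} u))"
        by (rule mult_left_mono) auto
      then show ?thesis by (simp add: algebra_simps)
    qed
    ultimately show "\<exists>d. (h has_real_derivative d) (at y) \<and> d \<le> 0" by blast
  qed
  then have "exp (-(K*x)) * (a + K * integral {0..x} u) \<le> a" by (simp add: h_def)
  then have "a + K * integral {0..x} u \<le> a * exp (K * x)"
    by (simp add: exp_minus field_simps)
  then show ?thesis using le[OF x] by linarith
qed

lemma int_est:
  assumes gW: "good W" and cY: "continuous_on {0..2*pi} (Y::real \<Rightarrow> M2)" and x: "x \<in> {0..2*pi}"
  shows "norm (integral {0..x} (\<lambda>t. W t ** Y t))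
     \<le> Bm * sqrt (om W) * sqrt (integral {0..x} (\<lambda>t. norm (Y t)^2))"
proof -
  have sub: "{0..x} \<subseteq> {0..2*pi}" using x by auto
  have i1: "(\<lambda>t. W t ** Y t) integrable_on {0..x}" using prod_int[OF gW cY] x by auto
  have i2: "(\<lambda>t. norm (W t) * norm (Y t)) integrable_on {0..x}"
    using absolutely_integrable_on_subinterval[OF prod_real_absint[OF gW cY] sub]
    by (auto simp: absolutely_integrable_on_def)
  have i3: "(\<lambda>t. norm (W t)^2) integrable_on {0..x}"
    using gW sub unfolding good_def by (auto intro: integrable_on_subinterval)
  have cY2: "continuous_on {0..x} (\<lambda>t. norm (Y t)^2)"
    using continuous_on_subset[OF cY sub] by (intro continuous_intros)
  have i4: "(\<lambda>t. norm (Y t)^2) integrable_on {0..x}"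
    by (rule integrable_continuous_real[OF cY2])
  have "norm (integral {0..x} (\<lambda>t. W t ** Y t)) \<le> integral {0..x} (\<lambda>t. Bm * (norm (W t) * norm (Y t)))"
  proof (rule integral_norm_bound_integral[OF i1])
    show "(\<lambda>t. Bm * (norm (W t) * norm (Y t))) integrable_on {0..x}"
      using integrable_on_cmult_left[OF i2, of Bm] by simp
    show "norm (W t ** Y t) \<le> Bm * (norm (W t) * norm (Y t))" for t
      using Bm(2)[of "W t" "Y t"] by (simp add: mult.assoc)
  qed
  also have "\<dots> = Bm * integral {0..x} (\<lambda>t. norm (W t) * norm (Y t))" by simp
  also have "\<dots> \<le> Bm * (sqrt (om W) * sqrt (integral {0..x} (\<lambda>t. norm (Y t)^2)))"
  proof (rule mult_left_mono)
    show "0 \<le> Bm" using Bm by simp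
    have cs: "(integral {0..x} (\<lambda>t. norm (W t) * norm (Y t)))^2
        \<le> integral {0..x} (\<lambda>t. norm (W t)^2) * integral {0..x} (\<lambda>t. norm (Y t)^2)"
      by (rule CS_int[OF i3 i4 i2])
    have "integral {0..x} (\<lambda>t. norm (W t)^2) \<le> om W"
      unfolding om_def using gW sub i3 unfolding good_def by (intro integral_subset_le) auto
    moreover have "0 \<le> integral {0..x} (\<lambda>t. norm (Y t)^2)" by (intro integral_nonneg i4) auto
    ultimately have "(integral {0..x} (\<lambda>t. norm (W t) * norm (Y t)))^2
        \<le> om W * integral {0..x} (\<lambda>t. norm (Y t)^2)"
      using cs by (meson mult_right_mono order_trans)
    then have "integral {0..x} (\<lambda>t. norm (W t) * norm (Y t)) \<le> sqrt (om W * integral {0..x} (\<lambda>t. norm (Y t)^2))"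
      by (rule real_le_rsqrt)
    then show "integral {0..x} (\<lambda>t. norm (W t) * norm (Y t)) \<le> sqrt (om W) * sqrt (integral {0..x} (\<lambda>t. norm (Y t)^2))"
      by (simp add: real_sqrt_mult)
  qed
  finally show ?thesis by (simp add: mult.assoc)
qed



definition sol :: "(real \<Rightarrow> M2) \<Rightarrow> (real \<Rightarrow> M2) \<Rightarrow> bool" where
  "sol W \<Psi> \<longleftrightarrow> continuous_on {0..2*pi} \<Psi> \<and>
     (\<forall>x\<in>{0..2*pi}. Jmat ** (\<Psi> x - mat 1) = integral {0..x} (\<lambda>t. W t ** \<Psi> t))"

lemma sol_eq: "sol W \<Psi> \<Longrightarrow> x \<in> {0..2*pi} \<Longrightarrow> \<Psi> x = mat 1 - Jmat ** integral {0..x} (\<lambda>t. W t ** \<Psi> t)"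
  unfolding sol_def by (intro J_sol) auto

definition cJ :: real where "cJ = Bm * norm Jmat"

lemma cJ_nonneg: "0 \<le> cJ" unfolding cJ_def using Bm by simp

lemma J_bound: "norm (Jmat ** (G::M2)) \<le> cJ * norm G"
  unfolding cJ_def using Bm(2)[of Jmat G] by simp

lemma sq_ineq: "0 \<le> (n::real) \<Longrightarrow> n \<le> p + q \<Longrightarrow> 0 \<le> p \<Longrightarrow> 0 \<le> q \<Longrightarrow> n^2 \<le> 2*p^2 + 2*q^2"
proof -
  assume a: "0 \<le> n" "n \<le> p + q" "0 \<le> p" "0 \<le> q"
  have "n^2 \<le> (p+q)^2" using a by (intro power_mono) auto
  also have "\<dots> \<le> 2*p^2 + 2*q^2"
  proof -
    have "0 \<le> (p - q)^2" by simp
    then show ?thesis by (simp add: power2_eq_square algebra_simps)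
  qed
  finally show ?thesis .
qed

lemma sq3: "0 \<le> a \<Longrightarrow> 0 \<le> b \<Longrightarrow> (c * sqrt a * sqrt b)^2 = c^2 * a * b"
  by (simp add: power_mult_distrib)

definition SB :: "real \<Rightarrow> real" where
  "SB \<omega> = 2 * norm (mat 1::M2)^2 * exp (2 * cJ^2 * Bm^2 * \<omega> * (2*pi))"

lemma SB_nonneg: "0 \<le> SB \<omega>" unfolding SB_def by simp

lemma sol_bound:
  assumes gW: "good W" and s: "sol W \<Psi>" and om: "om W \<le> \<omega>" and x: "x \<in> {0..2*pi}"
  shows "norm (\<Psi> x)^2 \<le> SB \<omega>"
proof -
  have c\<Psi>: "continuous_on {0..2*pi} \<Psi>" using s sol_def by auto
  define u where "u t = norm (\<Psi> t)^2" for t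
  have cu: "continuous_on {0..2*pi} u" unfolding u_def using c\<Psi> by (intro continuous_intros)
  define K where "K = 2 * cJ^2 * Bm^2 * \<omega>"
  have om0: "0 \<le> om W" using om_nonneg[OF gW] .
  have K0: "0 \<le> K" unfolding K_def using om om0 by simp
  have le: "u y \<le> 2 * norm (mat 1::M2)^2 + K * integral {0..y} u" if y: "y \<in> {0..2*pi}" for y
  proof -
    have I0: "0 \<le> integral {0..y} u"
      using cu y unfolding u_def
      by (intro integral_nonneg integrable_continuous_real) (auto intro: continuous_on_subset)
    have "norm (\<Psi> y) \<le> norm (mat 1::M2) + norm (Jmat ** integral {0..y} (\<lambda>t. W t ** \<Psi> t))"
      using sol_eq[OF s y] by (metis norm_triangle_ineq4)
    also have "\<dots> \<le> norm (mat 1::M2) + cJ * (Bm * sqrt (om W) * sqrt (integral {0..y} u))"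
      using J_bound int_est[OF gW c\<Psi> y] cJ_nonneg unfolding u_def
      by (meson add_left_mono mult_left_mono order_trans)
    finally have "u y \<le> 2 * norm (mat 1::M2)^2 + 2 * (cJ * (Bm * sqrt (om W) * sqrt (integral {0..y} u)))^2"
      unfolding u_def using cJ_nonneg Bm om0 I0[unfolded u_def]
      by (intro sq_ineq) auto
    also have "(cJ * (Bm * sqrt (om W) * sqrt (integral {0..y} u)))^2 = cJ^2 * Bm^2 * om W * integral {0..y} u"
      using om0 I0 by (simp add: power_mult_distrib)
    also have "2 * (cJ^2 * Bm^2 * om W * integral {0..y} u) \<le> K * integral {0..y} u"
    proof -
      have "cJ^2 * Bm^2 * om W \<le> cJ^2 * Bm^2 * \<omega>" using om by (intro mult_left_mono) auto
      then have "cJ^2 * Bm^2 * om W * integral {0..y} u \<le> cJ^2 * Bm^2 * \<omega> * integral {0..y} u"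
        using I0 by (rule mult_right_mono)
      then show ?thesis unfolding K_def by (simp add: mult_ac)
    qed
    finally show ?thesis by simp
  qed
  have "u x \<le> 2 * norm (mat 1::M2)^2 * exp (K * x)"
    by (rule gronwall[OF cu _ K0 le x]) auto
  also have "\<dots> \<le> 2 * norm (mat 1::M2)^2 * exp (K * (2*pi))"
    using x K0 by (intro mult_left_mono) (auto intro: mult_left_mono)
  finally show ?thesis unfolding u_def SB_def K_def by simp
qed

lemma good_diff:
  assumes "good W1" "good W2" shows "good (\<lambda>t. W1 t - W2 t)"
  unfolding good_def
proof
  show m: "(\<lambda>t. W1 t - W2 t) \<in> borel_measurable (lebesgue_on {0..2 * pi})"
    using assms unfolding good_def by auto
  show "(\<lambda>t. (norm (W1 t - W2 t))\<^sup>2) integrable_on {0..2 * pi}"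
  proof (rule measurable_bounded_by_integrable_imp_integrable)
    show "(\<lambda>t. (norm (W1 t - W2 t))\<^sup>2) \<in> borel_measurable (lebesgue_on {0..2 * pi})"
      using m by measurable
    show "(\<lambda>t. 2 * norm (W1 t)^2 + 2 * norm (W2 t)^2) integrable_on {0..2 * pi}"
      using assms unfolding good_def by (intro integrable_add integrable_on_cmult_left[of _ _ 2, simplified]) auto
    show "norm ((norm (W1 t - W2 t))\<^sup>2) \<le> 2 * norm (W1 t)^2 + 2 * norm (W2 t)^2" for t
      using sq_ineq[OF norm_ge_zero norm_triangle_ineq4 norm_ge_zero norm_ge_zero] by simp
  qed auto
qed

definition LS :: "real \<Rightarrow> real" where
  "LS \<omega> = 2 * cJ^2 * Bm^2 * (2*pi) * SB \<omega> * exp (2 * cJ^2 * Bm^2 * \<omega> * (2*pi))"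

lemma LS_nonneg: "0 \<le> LS \<omega>" unfolding LS_def using SB_nonneg by simp

lemma sol_stab:
  assumes g1: "good W1" and g2: "good W2" and s1: "sol W1 \<Psi>1" and s2: "sol W2 \<Psi>2"
    and o1: "om W1 \<le> \<omega>" and o2: "om W2 \<le> \<omega>" and x: "x \<in> {0..2*pi}"
  shows "norm (\<Psi>1 x - \<Psi>2 x)^2 \<le> LS \<omega> * om (\<lambda>t. W1 t - W2 t)"
proof -
  define D where "D = (\<lambda>t. W1 t - W2 t)"
  have gD: "good D" unfolding D_def by (rule good_diff[OF g1 g2])
  have c1: "continuous_on {0..2*pi} \<Psi>1" using s1 sol_def by auto
  have c2: "continuous_on {0..2*pi} \<Psi>2" using s2 sol_def by auto
  define E where "E = (\<lambda>t. \<Psi>1 t - \<Psi>2 t)"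
  have cE: "continuous_on {0..2*pi} E" unfolding E_def using c1 c2 by (intro continuous_intros)
  define u where "u t = norm (E t)^2" for t
  have cu: "continuous_on {0..2*pi} u" unfolding u_def using cE by (intro continuous_intros)
  define K where "K = 2 * cJ^2 * Bm^2 * \<omega>"
  define a where "a = 2 * cJ^2 * Bm^2 * (2*pi) * SB \<omega> * om D"
  have om1: "0 \<le> om W1" using om_nonneg[OF g1] .
  have omD: "0 \<le> om D" using om_nonneg[OF gD] .
  have K0: "0 \<le> K" unfolding K_def using o1 om1 by simp
  have a0: "0 \<le> a" unfolding a_def using SB_nonneg omD by simp
  have le: "u y \<le> a + K * integral {0..y} u" if y: "y \<in> {0..2*pi}" for y
  proof -
    have I0: "0 \<le> integral {0..y} u"
      using cu y unfolding u_def
      by (intro integral_nonneg integrable_continuous_real) (auto intro: continuous_on_subset)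
    have yle: "y \<le> 2*pi" using y by auto
    have cP2: "continuous_on {0..y} (\<lambda>t. norm (\<Psi>2 t)^2)"
      using c2 y by (intro continuous_intros) (auto intro: continuous_on_subset)
    have I2: "integral {0..y} (\<lambda>t. norm (\<Psi>2 t)^2) \<le> 2*pi * SB \<omega>"
    proof -
      have "integral {0..y} (\<lambda>t. norm (\<Psi>2 t)^2) \<le> integral {0..y} (\<lambda>t. SB \<omega>)"
        using sol_bound[OF g2 s2 o2] y
        by (intro integral_le integrable_continuous_real cP2) auto
      also have "\<dots> = y * SB \<omega>" using y by simp
      also have "\<dots> \<le> 2*pi * SB \<omega>" using yle SB_nonneg by (intro mult_right_mono) auto
      finally show ?thesis .
    qed
    have I2': "0 \<le> integral {0..y} (\<lambda>t. norm (\<Psi>2 t)^2)"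
      by (intro integral_nonneg integrable_continuous_real cP2) auto
    have i1: "(\<lambda>t. W1 t ** \<Psi>1 t) integrable_on {0..y}" using prod_int[OF g1 c1 yle] .
    have i2: "(\<lambda>t. W2 t ** \<Psi>2 t) integrable_on {0..y}" using prod_int[OF g2 c2 yle] .
    have i3: "(\<lambda>t. W1 t ** E t) integrable_on {0..y}" using prod_int[OF g1 cE yle] .
    have i4: "(\<lambda>t. D t ** \<Psi>2 t) integrable_on {0..y}" using prod_int[OF gD c2 yle] .
    have "integral {0..y} (\<lambda>t. W1 t ** \<Psi>1 t) - integral {0..y} (\<lambda>t. W2 t ** \<Psi>2 t)
        = integral {0..y} (\<lambda>t. W1 t ** \<Psi>1 t - W2 t ** \<Psi>2 t)"
      using i1 i2 by (simp add: integral_diff)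
    also have "\<dots> = integral {0..y} (\<lambda>t. W1 t ** E t + D t ** \<Psi>2 t)"
      unfolding E_def D_def
      by (simp add: matrix_sub_ldistrib2 matrix_sub_rdistrib2)
    also have "\<dots> = integral {0..y} (\<lambda>t. W1 t ** E t) + integral {0..y} (\<lambda>t. D t ** \<Psi>2 t)"
      using i3 i4 by (simp add: integral_add)
    finally have G: "integral {0..y} (\<lambda>t. W1 t ** \<Psi>1 t) - integral {0..y} (\<lambda>t. W2 t ** \<Psi>2 t)
        = integral {0..y} (\<lambda>t. W1 t ** E t) + integral {0..y} (\<lambda>t. D t ** \<Psi>2 t)" .
    have "E y = Jmat ** integral {0..y} (\<lambda>t. W2 t ** \<Psi>2 t) - Jmat ** integral {0..y} (\<lambda>t. W1 t ** \<Psi>1 t)"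
      unfolding E_def using sol_eq[OF s1 y] sol_eq[OF s2 y] by simp
    also have "\<dots> = - (Jmat ** (integral {0..y} (\<lambda>t. W1 t ** \<Psi>1 t) - integral {0..y} (\<lambda>t. W2 t ** \<Psi>2 t)))"
      by (simp add: matrix_sub_ldistrib2)
    finally have "norm (E y) = norm (Jmat ** (integral {0..y} (\<lambda>t. W1 t ** E t) + integral {0..y} (\<lambda>t. D t ** \<Psi>2 t)))"
      using G by simp
    also have "\<dots> \<le> cJ * norm (integral {0..y} (\<lambda>t. W1 t ** E t) + integral {0..y} (\<lambda>t. D t ** \<Psi>2 t))"
      by (rule J_bound)
    also have "\<dots> \<le> cJ * (Bm * sqrt (om W1) * sqrt (integral {0..y} u) + Bm * sqrt (om D) * sqrt (2*pi * SB \<omega>))"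
    proof (rule mult_left_mono[OF _ cJ_nonneg])
      have "norm (integral {0..y} (\<lambda>t. D t ** \<Psi>2 t)) \<le> Bm * sqrt (om D) * sqrt (integral {0..y} (\<lambda>t. norm (\<Psi>2 t)^2))"
        by (rule int_est[OF gD c2 y])
      also have "\<dots> \<le> Bm * sqrt (om D) * sqrt (2*pi * SB \<omega>)"
        using I2 Bm omD by (intro mult_left_mono) auto
      finally have n2: "norm (integral {0..y} (\<lambda>t. D t ** \<Psi>2 t)) \<le> Bm * sqrt (om D) * sqrt (2*pi * SB \<omega>)" .
      have n1: "norm (integral {0..y} (\<lambda>t. W1 t ** E t)) \<le> Bm * sqrt (om W1) * sqrt (integral {0..y} u)"
        using int_est[OF g1 cE y] unfolding u_def .
      show "norm (integral {0..y} (\<lambda>t. W1 t ** E t) + integral {0..y} (\<lambda>t. D t ** \<Psi>2 t))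
          \<le> Bm * sqrt (om W1) * sqrt (integral {0..y} u) + Bm * sqrt (om D) * sqrt (2*pi * SB \<omega>)"
        by (rule order_trans[OF norm_triangle_ineq add_mono[OF n1 n2]])
    qed
    also have "\<dots> = cJ * Bm * sqrt (om W1) * sqrt (integral {0..y} u) + cJ * Bm * sqrt (om D) * sqrt (2*pi * SB \<omega>)"
      by (simp add: algebra_simps)
    finally have "u y \<le> 2 * (cJ * Bm * sqrt (om W1) * sqrt (integral {0..y} u))^2 + 2 * (cJ * Bm * sqrt (om D) * sqrt (2*pi * SB \<omega>))^2"
      unfolding u_def using cJ_nonneg Bm om1 omD I0[unfolded u_def] SB_nonneg
      by (intro sq_ineq) auto
    also have "\<dots> = 2 * cJ^2 * Bm^2 * om W1 * integral {0..y} u + a"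
      unfolding a_def using om1 I0 omD SB_nonneg by (simp add: power_mult_distrib)
    also have "\<dots> \<le> K * integral {0..y} u + a"
    proof -
      have "cJ^2 * Bm^2 * om W1 \<le> cJ^2 * Bm^2 * \<omega>" using o1 by (intro mult_left_mono) auto
      then have "cJ^2 * Bm^2 * om W1 * integral {0..y} u \<le> cJ^2 * Bm^2 * \<omega> * integral {0..y} u"
        using I0 by (rule mult_right_mono)
      then show ?thesis unfolding K_def by (simp add: mult_ac)
    qed
    finally show ?thesis by simp
  qed
  have "u x \<le> a * exp (K * x)"
    by (rule gronwall[OF cu a0 K0 le x])
  also have "\<dots> \<le> a * exp (K * (2*pi))"
    using x K0 a0 by (intro mult_left_mono) (auto intro: mult_left_mono)
  also have "a * exp (K * (2*pi)) = LS \<omega> * om D"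
    unfolding a_def K_def LS_def by (simp add: mult_ac)
  finally show ?thesis unfolding u_def E_def D_def .
qed



lemma good_add_const:
  assumes gV: "good V"
  shows "good (\<lambda>t. V t + mat c)"
    and "om (\<lambda>t. V t + mat c) \<le> 2 * om V + 2 * (2 * cmod c^2) * (2*pi)"
proof -
  have m: "(\<lambda>t. V t + mat c) \<in> borel_measurable (lebesgue_on {0..2 * pi})"
    using gV unfolding good_def by auto
  have nm: "norm (mat c :: M2)^2 = 2 * cmod c^2" by (simp add: norm_mat power_mult_distrib)
  have bd: "norm (V t + mat c)^2 \<le> 2 * norm (V t)^2 + 2 * (2 * cmod c^2)" for t
    using sq_ineq[OF norm_ge_zero norm_triangle_ineq norm_ge_zero norm_ge_zero, of "V t" "mat c"] nm by simp
  have ib: "(\<lambda>t. 2 * norm (V t)^2 + 2 * (2 * cmod c^2)) integrable_on {0..2 * pi}"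
    using gV unfolding good_def by (intro integrable_add integrable_on_cmult_left[of _ _ 2, simplified]) auto
  have i: "(\<lambda>t. (norm (V t + mat c))\<^sup>2) integrable_on {0..2 * pi}"
  proof (rule measurable_bounded_by_integrable_imp_integrable[OF _ ib])
    show "(\<lambda>t. (norm (V t + mat c))\<^sup>2) \<in> borel_measurable (lebesgue_on {0..2 * pi})"
      using m by measurable
  qed (use bd in auto)
  then show "good (\<lambda>t. V t + mat c)" unfolding good_def using m by auto
  have "om (\<lambda>t. V t + mat c) \<le> integral {0..2*pi} (\<lambda>t. 2 * norm (V t)^2 + 2 * (2 * cmod c^2))"
    unfolding om_def by (rule integral_le[OF i ib bd])
  also have "\<dots> = 2 * om V + 2 * (2 * cmod c^2) * (2*pi)"
  proof -
    have "integral {0..2*pi} (\<lambda>t. 2 * norm (V t)^2 + 2 * (2 * cmod c^2))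
       = integral {0..2*pi} (\<lambda>t. 2 * norm (V t)^2) + integral {0..2*pi} (\<lambda>t. 2 * (2 * cmod c^2))"
      using gV unfolding good_def
      by (intro integral_add integrable_on_cmult_left[of _ _ 2, simplified]) auto
    then show ?thesis unfolding om_def by simp
  qed
  finally show "om (\<lambda>t. V t + mat c) \<le> 2 * om V + 2 * (2 * cmod c^2) * (2*pi)" .
qed

primrec Yit :: "(real \<Rightarrow> M2) \<Rightarrow> nat \<Rightarrow> complex \<Rightarrow> real \<Rightarrow> M2" where
  "Yit V 0 lam x = mat 1"
| "Yit V (Suc n) lam x = mat 1 - Jmat ** integral {0..x} (\<lambda>t. (V t + mat (lam/2)) ** Yit V n lam t)"

lemma cont_J_int:
  assumes "f integrable_on {0..2*pi}"
  shows "continuous_on {0..2*pi} (\<lambda>x. mat 1 - Jmat ** integral {0..x} f)"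
  by (intro continuous_on_diff continuous_on_const bounded_linear.continuous_on[OF bl_lmult]
      indefinite_integral_continuous_1 assms)

lemma Yit_cont: "good V \<Longrightarrow> continuous_on {0..2*pi} (Yit V n lam)"
proof (induction n)
  case 0 then show ?case by simp
next
  case (Suc n)
  have g: "good (\<lambda>t. V t + mat (lam/2))" using good_add_const(1)[OF Suc.prems] .
  show ?case
    using cont_J_int[OF prod_int[OF g Suc.IH[OF Suc.prems] order_refl]] by simp
qed

lemma int_t_pow: "0 \<le> x \<Longrightarrow> integral {0..x} (\<lambda>t. t^n) = x^(Suc n) / Suc n"
proof -
  assume x: "0 \<le> x"
  have "((\<lambda>t. t^n) has_integral (x^(Suc n) / Suc n - 0^(Suc n) / Suc n)) {0..x}"
  proof (rule fundamental_theorem_of_calculus[OF x])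
    fix t assume "t \<in> {0..x}"
    have "((\<lambda>t. t^(Suc n) / Suc n) has_real_derivative (Suc n * t^n / Suc n)) (at t within {0..x})"
      by (intro derivative_eq_intros) auto
    then show "((\<lambda>t. t^(Suc n) / Suc n) has_vector_derivative t^n) (at t within {0..x})"
      by (simp add: has_real_derivative_iff_has_vector_derivative[symmetric])
  qed
  then show ?thesis by (simp add: integral_unique)
qed

definition omR :: "(real \<Rightarrow> M2) \<Rightarrow> real \<Rightarrow> real" where
  "omR V R = 2 * om V + 2 * (2 * (R/2)^2) * (2*pi)"

lemma om_W_le:
  assumes "good V" "cmod lam \<le> R"
  shows "om (\<lambda>t. V t + mat (lam/2)) \<le> omR V R"
proof -
  have "cmod (lam/2) \<le> R/2" using assms(2) by (simp add: norm_divide)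
  then have "cmod (lam/2)^2 \<le> (R/2)^2" by (intro power_mono) auto
  then have p: "(cmod (lam/2))^2 * pi \<le> (R/2)^2 * pi" by (rule mult_right_mono) auto
  have "om (\<lambda>t. V t + mat (lam/2)) \<le> 2 * om V + 2 * (2 * cmod (lam/2)^2) * (2*pi)"
    by (rule good_add_const(2)[OF assms(1)])
  then show ?thesis using p unfolding omR_def by linarith
qed

lemma omR_nonneg: "good V \<Longrightarrow> 0 \<le> omR V R"
  unfolding omR_def using om_nonneg[of V] by simp

definition KK :: "real \<Rightarrow> real" where "KK \<omega> = cJ^2 * Bm^2 * \<omega>"
definition DD :: "real \<Rightarrow> real" where "DD \<omega> = cJ^2 * Bm^2 * \<omega> * (2*pi) * norm (mat 1 :: M2)^2"

lemma Yit_diff_sq: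
  assumes gV: "good V" and R: "cmod lam \<le> R" and x: "x \<in> {0..2*pi}"
  shows "norm (Yit V (Suc n) lam x - Yit V n lam x)^2 \<le> DD (omR V R) * (KK (omR V R)^n * x^n / fact n)"
  using x
proof (induction n arbitrary: x)
  define W where "W = (\<lambda>t. V t + mat (lam/2))"
  have gW: "good W" unfolding W_def by (rule good_add_const(1)[OF gV])
  have oW: "om W \<le> omR V R" unfolding W_def by (rule om_W_le[OF gV R])
  have oW0: "0 \<le> om W" by (rule om_nonneg[OF gW])
  case 0
  have c1: "continuous_on {0..2*pi} (\<lambda>t. mat 1 :: M2)" by simp
  have "norm (Yit V (Suc 0) lam x - Yit V 0 lam x) = norm (Jmat ** integral {0..x} (\<lambda>t. W t ** mat 1))"
    by (simp add: W_def norm_minus_commute)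
  also have "\<dots> \<le> cJ * (Bm * sqrt (om W) * sqrt (integral {0..x} (\<lambda>t. norm (mat 1 :: M2)^2)))"
    using J_bound int_est[OF gW c1 0(1)] cJ_nonneg by (meson mult_left_mono order_trans)
  finally have "norm (Yit V (Suc 0) lam x - Yit V 0 lam x)^2 \<le> (cJ * (Bm * sqrt (om W) * sqrt (x * norm (mat 1 :: M2)^2)))^2"
    using 0 by (intro power_mono) auto
  also have "\<dots> = cJ^2 * Bm^2 * om W * x * norm (mat 1 :: M2)^2"
    using 0 oW0 by (simp add: power_mult_distrib)
  also have "\<dots> \<le> DD (omR V R)"
    unfolding DD_def using 0 oW oW0 cJ_nonneg
    by (intro mult_right_mono mult_mono) (auto intro: mult_left_mono)
  finally show ?case by simp
next
  define W where "W = (\<lambda>t. V t + mat (lam/2))"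
  have gW: "good W" unfolding W_def by (rule good_add_const(1)[OF gV])
  have oW: "om W \<le> omR V R" unfolding W_def by (rule om_W_le[OF gV R])
  have oW0: "0 \<le> om W" by (rule om_nonneg[OF gW])
  case (Suc n)
  let ?K = "KK (omR V R)" and ?D = "DD (omR V R)"
  have K0: "0 \<le> ?K" unfolding KK_def using omR_nonneg[OF gV] by simp
  have D0: "0 \<le> ?D" unfolding DD_def using omR_nonneg[OF gV] by simp
  define E where "E = (\<lambda>t. Yit V (Suc n) lam t - Yit V n lam t)"
  have cE: "continuous_on {0..2*pi} E" unfolding E_def using Yit_cont[OF gV] by (intro continuous_intros)
  have xle: "x \<le> 2*pi" using Suc.prems by auto
  have i1: "(\<lambda>t. W t ** Yit V (Suc n) lam t) integrable_on {0..x}" by (rule prod_int[OF gW Yit_cont[OF gV] xle])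
  have i2: "(\<lambda>t. W t ** Yit V n lam t) integrable_on {0..x}" by (rule prod_int[OF gW Yit_cont[OF gV] xle])
  have "Yit V (Suc (Suc n)) lam x - Yit V (Suc n) lam x
      = - (Jmat ** (integral {0..x} (\<lambda>t. W t ** Yit V (Suc n) lam t) - integral {0..x} (\<lambda>t. W t ** Yit V n lam t)))"
    by (simp add: W_def matrix_sub_ldistrib2)
  also have "integral {0..x} (\<lambda>t. W t ** Yit V (Suc n) lam t) - integral {0..x} (\<lambda>t. W t ** Yit V n lam t)
      = integral {0..x} (\<lambda>t. W t ** E t)"
    using i1 i2 unfolding E_def by (simp add: integral_diff matrix_sub_ldistrib2)
  finally have "norm (Yit V (Suc (Suc n)) lam x - Yit V (Suc n) lam x) = norm (Jmat ** integral {0..x} (\<lambda>t. W t ** E t))"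
    by simp
  also have "\<dots> \<le> cJ * (Bm * sqrt (om W) * sqrt (integral {0..x} (\<lambda>t. norm (E t)^2)))"
    using J_bound int_est[OF gW cE Suc.prems] cJ_nonneg by (meson mult_left_mono order_trans)
  finally have n1: "norm (Yit V (Suc (Suc n)) lam x - Yit V (Suc n) lam x) \<le> cJ * (Bm * sqrt (om W) * sqrt (integral {0..x} (\<lambda>t. norm (E t)^2)))" .
  have cE2: "continuous_on {0..x} (\<lambda>t. norm (E t)^2)"
    using cE xle by (intro continuous_intros) (auto intro: continuous_on_subset)
  have I0: "0 \<le> integral {0..x} (\<lambda>t. norm (E t)^2)"
    by (intro integral_nonneg integrable_continuous_real cE2) auto
  have "integral {0..x} (\<lambda>t. norm (E t)^2) \<le> integral {0..x} (\<lambda>t. ?D * (?K^n * t^n / fact n))"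
  proof (rule integral_le)
    show "(\<lambda>t. norm (E t)^2) integrable_on {0..x}" by (intro integrable_continuous_real cE2)
    show "(\<lambda>t. ?D * (?K^n * t^n / fact n)) integrable_on {0..x}"
      by (intro integrable_continuous_real continuous_intros) auto
    show "norm (E t)^2 \<le> ?D * (?K^n * t^n / fact n)" if "t \<in> {0..x}" for t
      using Suc.IH[of t] that xle unfolding E_def by auto
  qed
  also have "\<dots> = ?D * (?K^n / fact n) * integral {0..x} (\<lambda>t. t^n)"
  proof -
    have "(\<lambda>t. ?D * (?K^n * t^n / fact n)) = (\<lambda>t. (?D * (?K^n / fact n)) * t^n)" by (rule ext) (simp add: field_simps)
    then show ?thesis by (simp only: integral_mult_right)
  qed
  also have "\<dots> = ?D * (?K^n / fact n) * (x^(Suc n) / Suc n)"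
    using Suc.prems by (simp add: int_t_pow)
  finally have I1: "integral {0..x} (\<lambda>t. norm (E t)^2) \<le> ?D * (?K^n / fact n) * (x^(Suc n) / Suc n)" .
  have "norm (Yit V (Suc (Suc n)) lam x - Yit V (Suc n) lam x)^2 \<le> (cJ * (Bm * sqrt (om W) * sqrt (integral {0..x} (\<lambda>t. norm (E t)^2))))^2"
    using n1 by (intro power_mono) auto
  also have "\<dots> = cJ^2 * Bm^2 * om W * integral {0..x} (\<lambda>t. norm (E t)^2)"
    using oW0 I0 by (simp add: power_mult_distrib)
  also have "\<dots> \<le> ?K * (?D * (?K^n / fact n) * (x^(Suc n) / Suc n))"
  proof -
    have "cJ^2 * Bm^2 * om W \<le> ?K" unfolding KK_def using oW by (intro mult_left_mono) auto
    then show ?thesis by (rule mult_mono[OF _ I1 K0 I0])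
  qed
  also have "\<dots> = ?D * (?K^(Suc n) * x^(Suc n) / fact (Suc n))"
    by (simp add: field_simps)
  finally show ?case .
qed



lemma am_gm: "0 \<le> a \<Longrightarrow> 0 \<le> b \<Longrightarrow> sqrt (a*b) \<le> (a+b)/2"
proof -
  assume a: "0 \<le> a" "0 \<le> b"
  have "0 \<le> (sqrt a - sqrt b)^2" by simp
  then have "2 * (sqrt a * sqrt b) \<le> a + b" using a by (simp add: power2_eq_square algebra_simps)
  then show ?thesis by (simp add: real_sqrt_mult)
qed

definition MM :: "real \<Rightarrow> nat \<Rightarrow> real" where
  "MM \<omega> n = sqrt (DD \<omega> * (KK \<omega>^n * (2*pi)^n / fact n))"

lemma MM_summable:
  assumes "0 \<le> \<omega>" shows "summable (MM \<omega>)"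
proof -
  define c where "c = KK \<omega> * (2*pi)"
  have c0: "0 \<le> c" unfolding c_def KK_def using assms by simp
  have D0: "0 \<le> DD \<omega>" unfolding DD_def using assms by simp
  have s: "summable (\<lambda>n. sqrt (DD \<omega>) / 2 * (inverse (fact n) * (4*c)^n + (1/4::real)^n))"
  proof -
    have "summable (\<lambda>n. inverse (fact n) * (4*c)^n)" by (rule summable_exp)
    moreover have "summable (\<lambda>n. (1/4::real)^n)" by (rule summable_geometric) simp
    ultimately have "summable (\<lambda>n. inverse (fact n) * (4*c)^n + (1/4::real)^n)" by (rule summable_add)
    then show "summable (\<lambda>n. sqrt (DD \<omega>) / 2 * (inverse (fact n) * (4*c)^n + (1/4::real)^n))"
      by (rule summable_mult)
  qed
  show ?thesis
  proof (rule summable_comparison_test'[OF s])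
    fix n :: nat
    have e1: "(4*c)^n * (1/4::real)^n = c^n"
    proof -
      have "(4*c)^n * (1/4::real)^n = (4*c*(1/4))^n" by (rule power_mult_distrib[symmetric])
      also have "4*c*(1/4) = c" by simp
      finally show ?thesis .
    qed
    have e2: "c^n = KK \<omega>^n * (2*pi)^n" unfolding c_def by (rule power_mult_distrib)
    have e: "KK \<omega>^n * (2*pi)^n / fact n = ((4*c)^n / fact n) * (1/4)^n"
    proof -
      have "((4*c)^n / fact n) * (1/4)^n = ((4*c)^n * (1/4)^n) / fact n" by simp
      also have "\<dots> = KK \<omega>^n * (2*pi)^n / fact n" unfolding e1 e2 ..
      finally show ?thesis by simp
    qed
    have "MM \<omega> n = sqrt (DD \<omega>) * sqrt (((4*c)^n / fact n) * (1/4)^n)"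
      unfolding MM_def e by (rule real_sqrt_mult)
    also have "\<dots> \<le> sqrt (DD \<omega>) * (((4*c)^n / fact n + (1/4)^n)/2)"
      using c0 D0 by (intro mult_left_mono am_gm) auto
    also have "\<dots> = sqrt (DD \<omega>) / 2 * (inverse (fact n) * (4*c)^n + (1/4::real)^n)"
      by (simp only: divide_inverse_commute[of "(4*c)^n"] times_divide_eq_right times_divide_eq_left)
    finally have le: "MM \<omega> n \<le> sqrt (DD \<omega>) / 2 * (inverse (fact n) * (4*c)^n + (1/4::real)^n)" .
    have "0 \<le> MM \<omega> n" unfolding MM_def e using c0 D0 by simp
    then show "norm (MM \<omega> n) \<le> sqrt (DD \<omega>) / 2 * (inverse (fact n) * (4*c)^n + (1/4::real)^n)"
      using le by simp
  qed
qed

lemma Yit_diff_MM: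
  assumes gV: "good V" and R: "cmod lam \<le> R" and x: "x \<in> {0..2*pi}"
  shows "norm (Yit V (Suc n) lam x - Yit V n lam x) \<le> MM (omR V R) n"
proof -
  have o: "0 \<le> omR V R" by (rule omR_nonneg[OF gV])
  have "DD (omR V R) * (KK (omR V R)^n * x^n / fact n) \<le> DD (omR V R) * (KK (omR V R)^n * (2*pi)^n / fact n)"
    using x o unfolding DD_def KK_def
    by (intro mult_left_mono divide_right_mono power_mono) auto
  then show ?thesis unfolding MM_def
    using Yit_diff_sq[OF gV R x, of n] by (intro real_le_rsqrt) auto
qed

definition Psi :: "(real \<Rightarrow> M2) \<Rightarrow> complex \<Rightarrow> real \<Rightarrow> M2" where
  "Psi V lam x = mat 1 + (\<Sum>i. Yit V (Suc i) lam x - Yit V i lam x)"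

lemma Yit_unif:
  assumes gV: "good V"
  shows "uniform_limit (cball 0 R \<times> {0..2*pi}) (\<lambda>n p. Yit V n (fst p) (snd p))
           (\<lambda>p. Psi V (fst p) (snd p)) sequentially"
proof -
  let ?A = "cball 0 R \<times> {0..2*pi}"
  have "uniform_limit ?A (\<lambda>n p. \<Sum>i<n. Yit V (Suc i) (fst p) (snd p) - Yit V i (fst p) (snd p))
          (\<lambda>p. \<Sum>i. Yit V (Suc i) (fst p) (snd p) - Yit V i (fst p) (snd p)) sequentially"
  proof (rule Weierstrass_m_test)
    show "summable (MM (omR V R))" by (rule MM_summable[OF omR_nonneg[OF gV]])
    fix n and p :: "complex \<times> real" assume "p \<in> ?A"
    then show "norm (Yit V (Suc n) (fst p) (snd p) - Yit V n (fst p) (snd p)) \<le> MM (omR V R) n"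
      by (intro Yit_diff_MM[OF gV]) (auto simp: dist_norm)
  qed
  then have "uniform_limit ?A (\<lambda>n p. mat 1 + (\<Sum>i<n. Yit V (Suc i) (fst p) (snd p) - Yit V i (fst p) (snd p)))
          (\<lambda>p. mat 1 + (\<Sum>i. Yit V (Suc i) (fst p) (snd p) - Yit V i (fst p) (snd p))) sequentially"
    by (intro uniform_limit_add uniform_limit_const)
  moreover have eq: "mat 1 + (\<Sum>i<n. Yit V (Suc i) (fst p) (snd p) - Yit V i (fst p) (snd p)) = Yit V n (fst p) (snd p)" for n p
    using sum_lessThan_telescope[of "\<lambda>i. Yit V i (fst p) (snd p)" n] by simp
  ultimately show ?thesis unfolding Psi_def by (simp only: eq)
qed

lemma ul_restrict:
  assumes "uniform_limit A F g sequentially" "\<And>x. x \<in> B \<Longrightarrow> h x \<in> A"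
  shows "uniform_limit B (\<lambda>n x. F n (h x)) (\<lambda>x. g (h x)) sequentially"
  using assms unfolding uniform_limit_iff
  by (auto elim!: eventually_mono)

lemma Yit_unif_lam:
  assumes gV: "good V"
  shows "uniform_limit {0..2*pi} (\<lambda>n x. Yit V n lam x) (Psi V lam) sequentially"
  using ul_restrict[OF Yit_unif[OF gV, of "cmod lam"], of "{0..2*pi}" "\<lambda>x. (lam, x)"] by auto

lemma Psi_cont: "good V \<Longrightarrow> continuous_on {0..2*pi} (Psi V lam)"
  by (rule uniform_limit_theorem[OF _ Yit_unif_lam]) (auto intro: always_eventually Yit_cont)

lemma Psi_sol:
  assumes gV: "good V"
  shows "sol (\<lambda>t. V t + mat (lam/2)) (Psi V lam)"
  unfolding sol_def
proof (intro conjI ballI Psi_cont[OF gV])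
  fix x assume x: "x \<in> {0..2*pi}"
  define W where "W = (\<lambda>t. V t + mat (lam/2))"
  have gW: "good W" unfolding W_def by (rule good_add_const(1)[OF gV])
  have oW0: "0 \<le> om W" by (rule om_nonneg[OF gW])
  have ul: "uniform_limit {0..2*pi} (\<lambda>n x. Yit V n lam x) (Psi V lam) sequentially"
    by (rule Yit_unif_lam[OF gV])
  have cP: "continuous_on {0..2*pi} (Psi V lam)" by (rule Psi_cont[OF gV])
  have L1: "(\<lambda>n. Yit V (Suc n) lam x) \<longlonglongrightarrow> Psi V lam x"
    using LIMSEQ_Suc[OF tendsto_uniform_limitI[OF ul x]] .
  have L2: "(\<lambda>n. integral {0..x} (\<lambda>t. W t ** Yit V n lam t)) \<longlonglongrightarrow> integral {0..x} (\<lambda>t. W t ** Psi V lam t)"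
  proof (rule LIMSEQ_I)
    fix e :: real assume e: "0 < e"
    define C where "C = Bm * sqrt (om W) * sqrt (2*pi) + 1"
    have "0 \<le> Bm * sqrt (om W) * sqrt (2*pi)" using Bm oW0 by simp
    then have C0: "0 < C" unfolding C_def by linarith
    have "\<forall>\<^sub>F n in sequentially. \<forall>t\<in>{0..2*pi}. dist (Yit V n lam t) (Psi V lam t) < e / C"
      using ul e C0 unfolding uniform_limit_iff by auto
    then obtain N where N: "\<And>n t. n \<ge> N \<Longrightarrow> t \<in> {0..2*pi} \<Longrightarrow> dist (Yit V n lam t) (Psi V lam t) < e / C"
      unfolding eventually_sequentially by blast
    show "\<exists>N. \<forall>n\<ge>N. norm (integral {0..x} (\<lambda>t. W t ** Yit V n lam t) - integral {0..x} (\<lambda>t. W t ** Psi V lam t)) < e"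
    proof (intro exI allI impI)
      fix n assume n: "n \<ge> N"
      define E where "E = (\<lambda>t. Yit V n lam t - Psi V lam t)"
      have cE: "continuous_on {0..2*pi} E" unfolding E_def using Yit_cont[OF gV] cP by (intro continuous_intros)
      have xle: "x \<le> 2*pi" using x by auto
      have i1: "(\<lambda>t. W t ** Yit V n lam t) integrable_on {0..x}" by (rule prod_int[OF gW Yit_cont[OF gV] xle])
      have i2: "(\<lambda>t. W t ** Psi V lam t) integrable_on {0..x}" by (rule prod_int[OF gW cP xle])
      have "integral {0..x} (\<lambda>t. W t ** Yit V n lam t) - integral {0..x} (\<lambda>t. W t ** Psi V lam t)
          = integral {0..x} (\<lambda>t. W t ** E t)"
        using i1 i2 unfolding E_def by (simp add: integral_diff matrix_sub_ldistrib2)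
      then have "norm (integral {0..x} (\<lambda>t. W t ** Yit V n lam t) - integral {0..x} (\<lambda>t. W t ** Psi V lam t))
          \<le> Bm * sqrt (om W) * sqrt (integral {0..x} (\<lambda>t. norm (E t)^2))"
        using int_est[OF gW cE x] by simp
      also have "\<dots> \<le> Bm * sqrt (om W) * sqrt (2*pi * (e/C)^2)"
      proof (intro mult_left_mono real_sqrt_le_mono)
        have cE2: "continuous_on {0..x} (\<lambda>t. norm (E t)^2)"
          using cE xle by (intro continuous_intros) (auto intro: continuous_on_subset)
        have "integral {0..x} (\<lambda>t. norm (E t)^2) \<le> integral {0..x} (\<lambda>t. (e/C)^2)"
        proof (rule integral_le)
          show "(\<lambda>t. norm (E t)^2) integrable_on {0..x}" by (rule integrable_continuous_real[OF cE2])
          show "(\<lambda>t. (e/C)^2) integrable_on {0..x}" by (intro integrable_continuous_real continuous_intros)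
          show "norm (E t)^2 \<le> (e/C)^2" if "t \<in> {0..x}" for t
          proof -
            have "norm (E t) < e/C" using N[OF n, of t] that xle unfolding E_def by (auto simp: dist_norm)
            then show ?thesis by (intro power_mono) auto
          qed
        qed
        also have "\<dots> = x * (e/C)^2" using x by simp
        also have "\<dots> \<le> 2*pi * (e/C)^2" using x by (intro mult_right_mono) auto
        finally show "integral {0..x} (\<lambda>t. norm (E t)^2) \<le> 2*pi * (e/C)^2" .
      qed (use Bm oW0 in auto)
      also have "\<dots> = Bm * sqrt (om W) * sqrt (2*pi) * (e/C)"
        using e C0 by (simp add: real_sqrt_mult)
      also have "\<dots> < C * (e/C)"
        using e C0 unfolding C_def by (intro mult_strict_right_mono) auto
      also have "\<dots> = e" using C0 by simp
      finally show "norm (integral {0..x} (\<lambda>t. W t ** Yit V n lam t) - integral {0..x} (\<lambda>t. W t ** Psi V lam t)) < e" .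
    qed
  qed
  have L3': "(\<lambda>n. mat 1 - Jmat ** integral {0..x} (\<lambda>t. W t ** Yit V n lam t)) \<longlonglongrightarrow> mat 1 - Jmat ** integral {0..x} (\<lambda>t. W t ** Psi V lam t)"
    by (intro tendsto_diff tendsto_const bounded_linear.tendsto[OF bl_lmult] L2)
  then have L3: "(\<lambda>n. Yit V (Suc n) lam x) \<longlonglongrightarrow> mat 1 - Jmat ** integral {0..x} (\<lambda>t. W t ** Psi V lam t)"
    by (simp add: W_def)
  have "Psi V lam x = mat 1 - Jmat ** integral {0..x} (\<lambda>t. W t ** Psi V lam t)"
    using LIMSEQ_unique[OF L1 L3] .
  then show "Jmat ** (Psi V lam x - mat 1) = integral {0..x} (\<lambda>t. (V t + mat (lam / 2)) ** Psi V lam t)"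
    unfolding W_def by (rule J_sol')
qed



primrec Cf :: "(real \<Rightarrow> M2) \<Rightarrow> nat \<Rightarrow> nat \<Rightarrow> real \<Rightarrow> M2" where
  "Cf V 0 k t = (if k = 0 then mat 1 else 0)"
| "Cf V (Suc n) k t = (if k = 0 then mat 1 else 0) - Jmat ** (integral {0..t} (\<lambda>s. V s ** Cf V n k s)
      + (if k = 0 then 0 else csm (1/2) (integral {0..t} (Cf V n (k - 1)))))"

lemma Cf_cont: "good V \<Longrightarrow> continuous_on {0..2*pi} (Cf V n k)"
proof (induction n arbitrary: k)
  case 0 then show ?case by simp
next
  case (Suc n)
  have c1: "continuous_on {0..2*pi} (\<lambda>t. integral {0..t} (\<lambda>s. V s ** Cf V n k s))"
    by (intro indefinite_integral_continuous_1 prod_int[OF Suc.prems Suc.IH[OF Suc.prems]]) simp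
  have c2: "continuous_on {0..2*pi} (\<lambda>t. integral {0..t} (Cf V n (k-1)))"
    by (intro indefinite_integral_continuous_1 integrable_continuous_real Suc.IH[OF Suc.prems])
  have c3: "continuous_on {0..2*pi} (\<lambda>t. integral {0..t} (\<lambda>s. V s ** Cf V n k s)
      + (if k = 0 then 0 else csm (1/2) (integral {0..t} (Cf V n (k - 1)))))"
  proof (cases "k = 0")
    case True then show ?thesis using c1 by simp
  next
    case False then show ?thesis using c1 bounded_linear.continuous_on[OF bl_csm c2]
      by (simp add: continuous_on_add)
  qed
  show ?case
    by (simp only: Cf.simps) (intro continuous_on_diff continuous_on_const bounded_linear.continuous_on[OF bl_lmult] c3)
qed

lemma Cf_zero: "n < k \<Longrightarrow> Cf V n k t = 0"
proof (induction n arbitrary: k t)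
  case 0 then show ?case by simp
next
  case (Suc n)
  then have k: "k \<noteq> 0" "n < k" "n < k - 1" by auto
  have f0: "Cf V n (k - Suc 0) = (\<lambda>_. 0)" by (rule ext, rule Suc.IH) (use k in simp)
  show ?case using Suc.IH k by (simp add: matrix_zero2 f0)
qed

lemma integral_csm: "f integrable_on S \<Longrightarrow> integral S (\<lambda>x. csm c (f x)) = csm c (integral S f)"
  using integral_linear[OF _ bl_csm, of f S c] by (simp add: o_def)

lemma integrable_csm: "f integrable_on S \<Longrightarrow> (\<lambda>x. csm c (f x)) integrable_on S"
  using integrable_linear[OF _ bl_csm, of f S c] by (simp add: o_def)

lemma csm_half: "csm (lam/2) (csm (lam^k) X) = csm (lam^Suc k) (csm (1/2) X)"
  by (simp add: mat_ext2 algebra_simps)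

lemma Yit_poly:
  assumes gV: "good V"
  shows "t \<in> {0..2*pi} \<Longrightarrow> Yit V n lam t = (\<Sum>k\<le>n. csm (lam^k) (Cf V n k t))"
proof (induction n arbitrary: t)
  case 0 then show ?case by simp
next
  case (Suc n)
  have tle: "t \<le> 2*pi" using Suc.prems by auto
  define C where "C = Cf V n"
  define A where "A k = integral {0..t} (\<lambda>s. V s ** C k s)" for k
  define B where "B k = csm (1/2) (integral {0..t} (C k))" for k
  have cC: "continuous_on {0..2*pi} (C k)" for k unfolding C_def by (rule Cf_cont[OF gV])
  have iA: "(\<lambda>s. V s ** C k s) integrable_on {0..t}" for k by (rule prod_int[OF gV cC tle])
  have iC: "C k integrable_on {0..t}" for k
    using continuous_on_subset[OF cC, of "{0..t}" k] tle by (intro integrable_continuous_real) auto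
  have "integral {0..t} (\<lambda>s. (V s + mat (lam/2)) ** Yit V n lam s)
      = integral {0..t} (\<lambda>s. \<Sum>k\<le>n. csm (lam^k) (V s ** C k s) + csm (lam^Suc k) (csm (1/2) (C k s)))"
  proof (rule integral_cong)
    fix s assume s: "s \<in> {0..t}"
    then have "s \<in> {0..2*pi}" using tle by auto
    then have "Yit V n lam s = (\<Sum>k\<le>n. csm (lam^k) (C k s))" using Suc.IH C_def by simp
    then show "(V s + mat (lam/2)) ** Yit V n lam s
        = (\<Sum>k\<le>n. csm (lam^k) (V s ** C k s) + csm (lam^Suc k) (csm (1/2) (C k s)))"
    proof -
      have "(V s + mat (lam/2)) ** (\<Sum>k\<le>n. csm (lam^k) (C k s))
          = V s ** (\<Sum>k\<le>n. csm (lam^k) (C k s)) + csm (lam/2) (\<Sum>k\<le>n. csm (lam^k) (C k s))"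
        by (simp only: matrix_add_rdistrib2 mat_mult_left)
      also have "\<dots> = (\<Sum>k\<le>n. csm (lam^k) (V s ** C k s)) + (\<Sum>k\<le>n. csm (lam^Suc k) (csm (1/2) (C k s)))"
        by (simp only: mmult_sum csm_mult_right csm_sum csm_half)
      also have "\<dots> = (\<Sum>k\<le>n. csm (lam^k) (V s ** C k s) + csm (lam^Suc k) (csm (1/2) (C k s)))"
        by (simp only: sum.distrib)
      finally show ?thesis using \<open>Yit V n lam s = _\<close> by simp
    qed
  qed
  also have "\<dots> = (\<Sum>k\<le>n. integral {0..t} (\<lambda>s. csm (lam^k) (V s ** C k s)) + integral {0..t} (\<lambda>s. csm (lam^Suc k) (csm (1/2) (C k s))))"
  proof -
    have "integral {0..t} (\<lambda>s. \<Sum>k\<le>n. csm (lam^k) (V s ** C k s) + csm (lam^Suc k) (csm (1/2) (C k s)))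
        = (\<Sum>k\<le>n. integral {0..t} (\<lambda>s. csm (lam^k) (V s ** C k s) + csm (lam^Suc k) (csm (1/2) (C k s))))"
      by (rule integral_sum) (auto intro!: integrable_add integrable_csm iA iC)
    also have "\<dots> = (\<Sum>k\<le>n. integral {0..t} (\<lambda>s. csm (lam^k) (V s ** C k s)) + integral {0..t} (\<lambda>s. csm (lam^Suc k) (csm (1/2) (C k s))))"
      by (intro sum.cong refl integral_add integrable_csm iA iC)
    finally show ?thesis .
  qed
  also have "\<dots> = (\<Sum>k\<le>n. csm (lam^k) (A k) + csm (lam^Suc k) (B k))"
    unfolding A_def B_def by (simp add: integral_csm integrable_csm iA iC)
  finally have I: "integral {0..t} (\<lambda>s. (V s + mat (lam/2)) ** Yit V n lam s)
      = (\<Sum>k\<le>n. csm (lam^k) (A k) + csm (lam^Suc k) (B k))" .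
  have CS: "Cf V (Suc n) k t = (if k = 0 then mat 1 else 0) - Jmat ** (A k + (if k = 0 then 0 else B (k-1)))" for k
    by (simp add: A_def B_def C_def)
  have "(\<Sum>k\<le>Suc n. csm (lam^k) (Cf V (Suc n) k t))
      = (\<Sum>k\<le>Suc n. csm (lam^k) (if k = 0 then mat 1 else 0))
        - Jmat ** ((\<Sum>k\<le>Suc n. csm (lam^k) (A k)) + (\<Sum>k\<le>Suc n. csm (lam^k) (if k = 0 then 0 else B (k-1))))"
    unfolding CS by (simp add: csm_diff csm_add csm_mult_right sum_subtractf mmult_sum sum.distrib matrix_add_ldistrib)
  also have "(\<Sum>k\<le>Suc n. csm (lam^k) (if k = 0 then mat 1 else 0)) = mat 1"
    by (simp only: sum.atMost_Suc_shift) simp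
  also have "(\<Sum>k\<le>Suc n. csm (lam^k) (A k)) = (\<Sum>k\<le>n. csm (lam^k) (A k))"
  proof -
    have "A (Suc n) = 0" unfolding A_def C_def by (simp add: Cf_zero matrix_zero2)
    then show ?thesis by (simp only: sum.atMost_Suc) simp
  qed
  also have "(\<Sum>k\<le>Suc n. csm (lam^k) (if k = 0 then 0 else B (k-1))) = (\<Sum>k\<le>n. csm (lam^Suc k) (B k))"
    by (simp only: sum.atMost_Suc_shift) simp
  also have "mat 1 - Jmat ** ((\<Sum>k\<le>n. csm (lam^k) (A k)) + (\<Sum>k\<le>n. csm (lam^Suc k) (B k)))
      = Yit V (Suc n) lam t"
    using I by (simp add: sum.distrib)
  finally show ?case by simp
qed

lemma bl_trace: "bounded_linear (trace :: M2 \<Rightarrow> complex)"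
proof -
  have "linear (trace :: M2 \<Rightarrow> complex)"
    unfolding linear_iff by (simp add: trace_add trace_def sum_2 scaleR_add_right)
  then show ?thesis using linear_conv_bounded_linear by blast
qed

lemma trace_Yit_hol: "good V \<Longrightarrow> (\<lambda>lam. trace (Yit V n lam (2*pi))) holomorphic_on UNIV"
proof -
  assume gV: "good V"
  have "(\<lambda>lam. trace (Yit V n lam (2*pi))) = (\<lambda>lam. \<Sum>k\<le>n. lam^k * trace (Cf V n k (2*pi)))"
    using Yit_poly[OF gV] by (simp add: trace_sum trace_csm)
  moreover have "(\<lambda>lam. \<Sum>k\<le>n. lam^k * trace (Cf V n k (2*pi))) holomorphic_on UNIV"
    by (intro holomorphic_intros)
  ultimately show ?thesis by simp
qed

lemma hol_UNIV: "(\<And>R. f holomorphic_on ball 0 R) \<Longrightarrow> f holomorphic_on UNIV"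
  unfolding holomorphic_on_def
proof
  fix z :: complex assume h: "\<And>R. (\<forall>x\<in>ball 0 R. f field_differentiable at x within ball 0 R)"
  have "f holomorphic_on ball 0 (cmod z + 1)" using h unfolding holomorphic_on_def by blast
  then have "f field_differentiable at z" by (rule holomorphic_on_imp_differentiable_at) auto
  then show "f field_differentiable at z within UNIV" by simp
qed

lemma Psi_trace_hol:
  assumes gV: "good V"
  shows "(\<lambda>lam. trace (Psi V lam (2*pi))) holomorphic_on UNIV"
proof (rule hol_UNIV)
  fix R :: real
  have ul0: "uniform_limit (cball 0 R) (\<lambda>n lam. Yit V n lam (2*pi)) (\<lambda>lam. Psi V lam (2*pi)) sequentially"
    using ul_restrict[OF Yit_unif[OF gV, of R], of "cball 0 R" "\<lambda>lam. (lam, 2*pi)"] by auto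
  have ul: "uniform_limit (cball 0 R) (\<lambda>n lam. trace (Yit V n lam (2*pi))) (\<lambda>lam. trace (Psi V lam (2*pi))) sequentially"
    by (rule bounded_linear.uniform_limit[OF bl_trace ul0])
  have "\<forall>\<^sub>F n in sequentially. continuous_on (cball 0 R) (\<lambda>lam. trace (Yit V n lam (2*pi)))
        \<and> (\<lambda>lam. trace (Yit V n lam (2*pi))) holomorphic_on ball 0 R"
    using trace_Yit_hol[OF gV]
    by (intro always_eventually allI conjI holomorphic_on_imp_continuous_on)
       (auto intro: holomorphic_on_subset)
  then show "(\<lambda>lam. trace (Psi V lam (2*pi))) holomorphic_on ball 0 R"
    using holomorphic_uniform_limit[OF _ ul] by auto
qed



definition IL :: "(real \<Rightarrow> complex) \<Rightarrow> real" where
  "IL \<phi> = integral\<^sup>L (lebesgue_on {0..2*pi}) (\<lambda>x. (cmod (\<phi> x))^2)"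

lemma L2T_meas: "L2T \<phi> \<Longrightarrow> \<phi> \<in> borel_measurable (lebesgue_on {0..2*pi})"
  unfolding L2T_def by auto

lemma L2T_int: "L2T \<phi> \<Longrightarrow> integrable (lebesgue_on {0..2*pi}) (\<lambda>x. (cmod (\<phi> x))^2)"
  unfolding L2T_def by auto

lemma IL_HK: "L2T \<phi> \<Longrightarrow> (\<lambda>x. (cmod (\<phi> x))^2) integrable_on {0..2*pi} \<and> IL \<phi> = integral {0..2*pi} (\<lambda>x. (cmod (\<phi> x))^2)"
  unfolding IL_def using integrable_on_lebesgue_on[OF L2T_int] lebesgue_integral_eq_integral[OF L2T_int]
  by auto

lemma IL_nonneg: "0 \<le> IL \<phi>"
  unfolding IL_def by (rule Bochner_Integration.integral_nonneg) auto

lemma L2norm_nonneg: "0 \<le> L2norm \<phi>"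
  unfolding L2norm_def using IL_nonneg[of \<phi>] unfolding IL_def by simp

lemma L2T_diff_int:
  assumes "L2T \<phi>" "L2T \<psi>"
  shows "integrable (lebesgue_on {0..2*pi}) (\<lambda>x. (cmod (\<phi> x - \<psi> x))^2)"
proof (rule Bochner_Integration.integrable_bound)
  show "integrable (lebesgue_on {0..2*pi}) (\<lambda>x. 2 * (cmod (\<phi> x))^2 + 2 * (cmod (\<psi> x))^2)"
    using L2T_int[OF assms(1)] L2T_int[OF assms(2)]
    by (intro Bochner_Integration.integrable_add Bochner_Integration.integrable_mult_right)
  have m1: "\<phi> \<in> borel_measurable (lebesgue_on {0..2*pi})" by (rule L2T_meas[OF assms(1)])
  have m2: "\<psi> \<in> borel_measurable (lebesgue_on {0..2*pi})" by (rule L2T_meas[OF assms(2)])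
  show "(\<lambda>x. (cmod (\<phi> x - \<psi> x))^2) \<in> borel_measurable (lebesgue_on {0..2*pi})"
    using m1 m2 by measurable
  show "AE x in lebesgue_on {0..2 * pi}. norm ((cmod (\<phi> x - \<psi> x))\<^sup>2) \<le> norm (2 * (cmod (\<phi> x))\<^sup>2 + 2 * (cmod (\<psi> x))\<^sup>2)"
    using sq_ineq[OF norm_ge_zero norm_triangle_ineq4 norm_ge_zero norm_ge_zero] by auto
qed

lemma L2T_diff: "L2T \<phi> \<Longrightarrow> L2T \<psi> \<Longrightarrow> L2T (\<lambda>x. \<phi> x - \<psi> x)"
  unfolding L2T_def using L2T_diff_int[of \<phi> \<psi>] by (auto simp: L2T_def)

lemma IL_L2norm: "IL \<phi> = 2*pi * L2norm \<phi>^2"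
  unfolding IL_def L2norm_def using IL_nonneg[of \<phi>] by (simp add: IL_def)

lemma fV_cont: "continuous_on UNIV fV"
  using linear_continuous_on[OF fV_linear] .

lemma good_V: assumes "L2T \<phi>" shows "good (Vmat \<phi>)" and "om (Vmat \<phi>) = 2 * IL \<phi>"
proof -
  have m: "Vmat \<phi> \<in> borel_measurable (lebesgue_on {0..2*pi})"
    unfolding Vmat_fV[abs_def]
    using measurable_compose[OF L2T_meas[OF assms] borel_measurable_continuous_onI[OF fV_cont]]
    by (simp add: o_def)
  have e: "(\<lambda>t. norm (Vmat \<phi> t)^2) = (\<lambda>t. 2 * (cmod (\<phi> t))^2)"
    by (rule ext) (simp add: Vmat_fV norm_fV power_mult_distrib)
  have i: "(\<lambda>t. norm (Vmat \<phi> t)^2) integrable_on {0..2*pi}"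
    unfolding e using IL_HK[OF assms] by (intro integrable_on_cmult_left[of _ _ 2, simplified]) auto
  show "good (Vmat \<phi>)" unfolding good_def using m i by auto
  show "om (Vmat \<phi>) = 2 * IL \<phi>" unfolding om_def e using IL_HK[OF assms] by simp
qed

lemma om_Vdiff:
  assumes "L2T \<phi>" "L2T \<psi>"
  shows "om (\<lambda>t. (Vmat \<phi> t + mat c) - (Vmat \<psi> t + mat c)) = 2 * (2*pi * L2norm (\<lambda>x. \<phi> x - \<psi> x)^2)"
proof -
  have e: "(\<lambda>t. norm ((Vmat \<phi> t + mat c) - (Vmat \<psi> t + mat c))^2) = (\<lambda>t. 2 * (cmod (\<phi> t - \<psi> t))^2)"
    by (rule ext) (simp add: Vmat_fV norm_fV power_mult_distrib fV_diff[symmetric])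
  have "om (\<lambda>t. (Vmat \<phi> t + mat c) - (Vmat \<psi> t + mat c)) = 2 * IL (\<lambda>x. \<phi> x - \<psi> x)"
    unfolding om_def e using IL_HK[OF L2T_diff[OF assms]] by simp
  then show ?thesis by (simp add: IL_L2norm)
qed

lemma is_Psi_sol: "is_Psi \<phi> lam \<Psi> \<Longrightarrow> sol (\<lambda>t. Vmat \<phi> t + mat (lam/2)) \<Psi>"
  unfolding is_Psi_def sol_def by auto

lemma Delta_eq:
  assumes "L2T \<phi>"
  shows "Delta \<phi> lam = trace (Psi (Vmat \<phi>) lam (2*pi))"
proof -
  define W where "W = (\<lambda>t. Vmat \<phi> t + mat (lam/2))"
  have gV: "good (Vmat \<phi>)" by (rule good_V(1)[OF assms])
  have gW: "good W" unfolding W_def by (rule good_add_const(1)[OF gV])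
  have s: "sol W (Psi (Vmat \<phi>) lam)" unfolding W_def by (rule Psi_sol[OF gV])
  have ex: "is_Psi \<phi> lam (Psi (Vmat \<phi>) lam)"
    unfolding is_Psi_def
  proof (intro conjI ballI)
    show "continuous_on {0..2 * pi} (Psi (Vmat \<phi>) lam)" by (rule Psi_cont[OF gV])
    fix x assume x: "x \<in> {0..2*pi}"
    show "(\<lambda>t. (Vmat \<phi> t + mat (lam / 2)) ** Psi (Vmat \<phi>) lam t) integrable_on {0..x}"
      using prod_int[OF gW Psi_cont[OF gV]] x unfolding W_def by auto
    show "Jmat ** (Psi (Vmat \<phi>) lam x - mat 1) = integral {0..x} (\<lambda>t. (Vmat \<phi> t + mat (lam / 2)) ** Psi (Vmat \<phi>) lam t)"
      using s x unfolding sol_def W_def by auto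
  qed
  have uniq: "\<Psi> (2*pi) = Psi (Vmat \<phi>) lam (2*pi)" if "is_Psi \<phi> lam \<Psi>" for \<Psi>
  proof -
    have s2: "sol W \<Psi>" unfolding W_def by (rule is_Psi_sol[OF that])
    have "norm (\<Psi> (2*pi) - Psi (Vmat \<phi>) lam (2*pi))^2 \<le> LS (om W) * om (\<lambda>t. W t - W t)"
      by (rule sol_stab[OF gW gW s2 s]) auto
    also have "om (\<lambda>t. W t - W t) = 0" unfolding om_def by simp
    finally show ?thesis by simp
  qed
  show ?thesis unfolding Delta_def
  proof (rule the_equality)
    show "\<exists>\<Psi>. is_Psi \<phi> lam \<Psi> \<and> trace (Psi (Vmat \<phi>) lam (2 * pi)) = trace (\<Psi> (2 * pi))"
      using ex by blast
    show "d = trace (Psi (Vmat \<phi>) lam (2 * pi))" if "\<exists>\<Psi>. is_Psi \<phi> lam \<Psi> \<and> d = trace (\<Psi> (2 * pi))" for d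
      using that uniq by auto
  qed
qed

lemma Delta_hol: "L2T \<phi> \<Longrightarrow> Delta \<phi> holomorphic_on UNIV"
proof -
  assume a: "L2T \<phi>"
  have "Delta \<phi> = (\<lambda>lam. trace (Psi (Vmat \<phi>) lam (2*pi)))" using Delta_eq[OF a] by auto
  then show ?thesis using Psi_trace_hol[OF good_V(1)[OF a]] by simp
qed

definition LL :: "real \<Rightarrow> real \<Rightarrow> real" where
  "LL M R = 2 * sqrt (LS (4*M + 2*(2*(R/2)^2)*(2*pi)) * (4*pi))"

lemma LL_nonneg: "0 \<le> LL M R"
  unfolding LL_def using LS_nonneg by simp

lemma lip_Delta:
  assumes p: "L2T \<phi>" and q: "L2T \<psi>" and Mp: "IL \<phi> \<le> M" and Mq: "IL \<psi> \<le> M" and R: "cmod lam \<le> R"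
  shows "cmod (Delta \<phi> lam - Delta \<psi> lam) \<le> LL M R * L2norm (\<lambda>x. \<phi> x - \<psi> x)"
proof -
  define \<omega> where "\<omega> = 4*M + 2*(2*(R/2)^2)*(2*pi)"
  have gp: "good (Vmat \<phi>)" by (rule good_V(1)[OF p])
  have gq: "good (Vmat \<psi>)" by (rule good_V(1)[OF q])
  have o1: "om (\<lambda>t. Vmat \<phi> t + mat (lam/2)) \<le> \<omega>"
    using om_W_le[OF gp R] good_V(2)[OF p] Mp unfolding omR_def \<omega>_def by simp
  have o2: "om (\<lambda>t. Vmat \<psi> t + mat (lam/2)) \<le> \<omega>"
    using om_W_le[OF gq R] good_V(2)[OF q] Mq unfolding omR_def \<omega>_def by simp
  have "norm (Psi (Vmat \<phi>) lam (2*pi) - Psi (Vmat \<psi>) lam (2*pi))^2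
      \<le> LS \<omega> * om (\<lambda>t. (Vmat \<phi> t + mat (lam/2)) - (Vmat \<psi> t + mat (lam/2)))"
    by (rule sol_stab[OF good_add_const(1)[OF gp] good_add_const(1)[OF gq] Psi_sol[OF gp] Psi_sol[OF gq] o1 o2]) auto
  also have "\<dots> = LS \<omega> * (4*pi) * L2norm (\<lambda>x. \<phi> x - \<psi> x)^2"
    unfolding om_Vdiff[OF p q] by simp
  finally have "norm (Psi (Vmat \<phi>) lam (2*pi) - Psi (Vmat \<psi>) lam (2*pi)) \<le> sqrt (LS \<omega> * (4*pi) * L2norm (\<lambda>x. \<phi> x - \<psi> x)^2)"
    by (rule real_le_rsqrt)
  also have "\<dots> = sqrt (LS \<omega> * (4*pi)) * L2norm (\<lambda>x. \<phi> x - \<psi> x)"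
    using L2norm_nonneg[of "\<lambda>x. \<phi> x - \<psi> x"] by (simp add: real_sqrt_mult)
  finally have n: "norm (Psi (Vmat \<phi>) lam (2*pi) - Psi (Vmat \<psi>) lam (2*pi)) \<le> sqrt (LS \<omega> * (4*pi)) * L2norm (\<lambda>x. \<phi> x - \<psi> x)" .
  have "cmod (Delta \<phi> lam - Delta \<psi> lam) = cmod (trace (Psi (Vmat \<phi>) lam (2*pi) - Psi (Vmat \<psi>) lam (2*pi)))"
    by (simp add: Delta_eq[OF p] Delta_eq[OF q] trace_diff2)
  also have "\<dots> \<le> 2 * norm (Psi (Vmat \<phi>) lam (2*pi) - Psi (Vmat \<psi>) lam (2*pi))" by (rule norm_trace)
  also have "\<dots> \<le> 2 * (sqrt (LS \<omega> * (4*pi)) * L2norm (\<lambda>x. \<phi> x - \<psi> x))" using n by simp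
  finally show ?thesis unfolding LL_def \<omega>_def by simp
qed



lemma Omega_IL: "\<phi> \<in> Omega N \<Longrightarrow> L2T \<phi> \<and> IL \<phi> \<le> 2*pi * max N 0"
proof -
  assume "\<phi> \<in> Omega N"
  then have a: "L2T \<phi>" "IL \<phi> / (2*pi) \<le> N" unfolding Omega_def IL_def by auto
  then have "IL \<phi> \<le> 2*pi * N" by (simp add: field_simps)
  moreover have "2*pi*N \<le> 2*pi * max N 0" by (intro mult_left_mono) auto
  ultimately show ?thesis using a by linarith
qed

lemma part1:
  "\<exists>C::real. \<forall>\<phi>\<in>Omega N. \<forall>\<psi>\<in>Omega N.
            sqrt (\<Sum>j\<le>k. (cmod ((deriv ^^ j) (Delta \<phi>) 0 - (deriv ^^ j) (Delta \<psi>) 0))^2)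
              \<le> C * L2norm (\<lambda>x. \<phi> x - \<psi> x)"
proof -
  define M where "M = 2*pi * max N 0"
  define L where "L = LL M 1"
  have L0: "0 \<le> L" unfolding L_def by (rule LL_nonneg)
  show ?thesis
  proof (intro exI ballI)
    fix \<phi> \<psi> assume p: "\<phi> \<in> Omega N" and q: "\<psi> \<in> Omega N"
    have p': "L2T \<phi>" "IL \<phi> \<le> M" using Omega_IL[OF p] unfolding M_def by auto
    have q': "L2T \<psi>" "IL \<psi> \<le> M" using Omega_IL[OF q] unfolding M_def by auto
    define d where "d = L2norm (\<lambda>x. \<phi> x - \<psi> x)"
    have d0: "0 \<le> d" unfolding d_def by (rule L2norm_nonneg)
    define f where "f = (\<lambda>w. Delta \<phi> w - Delta \<psi> w)"
    have hp: "Delta \<phi> holomorphic_on UNIV" by (rule Delta_hol[OF p'(1)])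
    have hq: "Delta \<psi> holomorphic_on UNIV" by (rule Delta_hol[OF q'(1)])
    have hf: "f holomorphic_on UNIV" unfolding f_def using hp hq by (intro holomorphic_intros)
    have tm: "(cmod ((deriv ^^ j) (Delta \<phi>) 0 - (deriv ^^ j) (Delta \<psi>) 0))^2 \<le> (fact k * L * d)^2"
      if j: "j \<in> {..k}" for j
    proof -
      have "(deriv ^^ j) f 0 = (deriv ^^ j) (Delta \<phi>) 0 - (deriv ^^ j) (Delta \<psi>) 0"
        unfolding f_def by (rule higher_deriv_diff[OF hp hq]) auto
      moreover have "norm ((deriv ^^ j) f 0) \<le> fact j * (L * d) / 1^j"
      proof (rule Cauchy_inequality)
        show "f holomorphic_on ball 0 1" using hf by (rule holomorphic_on_subset) auto
        show "continuous_on (cball 0 1) f"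
          using holomorphic_on_imp_continuous_on[OF hf] by (rule continuous_on_subset) auto
        show "norm (f x) \<le> L * d" if "norm (0 - x) = 1" for x
          unfolding f_def L_def d_def
          by (rule lip_Delta[OF p'(1) q'(1) p'(2) q'(2)]) (use that in auto)
      qed auto
      ultimately have "cmod ((deriv ^^ j) (Delta \<phi>) 0 - (deriv ^^ j) (Delta \<psi>) 0) \<le> fact j * (L * d)" by simp
      also have "\<dots> \<le> fact k * (L * d)"
        using j L0 d0 by (intro mult_right_mono) (auto intro: fact_mono)
      finally show ?thesis by (intro power_mono) (auto simp: mult.assoc)
    qed
    have "(\<Sum>j\<le>k. (cmod ((deriv ^^ j) (Delta \<phi>) 0 - (deriv ^^ j) (Delta \<psi>) 0))^2)
        \<le> of_nat (card {..k}) * (fact k * L * d)^2"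
      by (rule sum_bounded_above) (rule tm)
    also have "\<dots> = real (Suc k) * (fact k * L * d)^2" by simp
    also have "\<dots> \<le> (real (Suc k) * (fact k * L * d))^2"
    proof -
      have "real (Suc k) * 1 \<le> real (Suc k) * real (Suc k)" by (intro mult_left_mono) auto
      then have h: "real (Suc k) * (fact k * L * d)^2 \<le> (real (Suc k) * real (Suc k)) * (fact k * L * d)^2"
        by (intro mult_right_mono) auto
      have eq: "(real (Suc k) * (fact k * L * d))^2 = (real (Suc k) * real (Suc k)) * (fact k * L * d)^2"
        by (simp only: power2_eq_square mult_ac)
      show ?thesis unfolding eq by (rule h)
    qed
    finally have "sqrt (\<Sum>j\<le>k. (cmod ((deriv ^^ j) (Delta \<phi>) 0 - (deriv ^^ j) (Delta \<psi>) 0))^2)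
        \<le> sqrt ((real (Suc k) * (fact k * L * d))^2)" by (rule real_sqrt_le_mono)
    also have "\<dots> = real (Suc k) * fact k * L * d" using L0 d0 by (simp add: mult.assoc)
    finally show "sqrt (\<Sum>j\<le>k. (cmod ((deriv ^^ j) (Delta \<phi>) 0 - (deriv ^^ j) (Delta \<psi>) 0))^2)
        \<le> (real (Suc k) * fact k * L) * L2norm (\<lambda>x. \<phi> x - \<psi> x)" unfolding d_def .
  qed
qed

lemma part2:
  assumes p: "L2T \<phi>" and K: "compact K" and e: "\<epsilon> > 0"
  shows "\<exists>\<delta>>0. \<forall>\<psi>. L2T \<psi> \<and> L2norm (\<lambda>x. \<psi> x - \<phi> x) < \<delta> \<longrightarrow>
               (\<forall>lam\<in>K. cmod (Delta \<psi> lam - Delta \<phi> lam) < \<epsilon>)"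
proof -
  obtain B where B: "B > 0" "\<And>x. x \<in> K \<Longrightarrow> norm x \<le> B"
    using compact_imp_bounded[OF K] unfolding bounded_pos by auto
  define M where "M = 2 * IL \<phi> + 2 * (2*pi)"
  define L where "L = LL M B"
  have L0: "0 \<le> L" unfolding L_def by (rule LL_nonneg)
  define \<delta> where "\<delta> = min 1 (\<epsilon> / (L+1))"
  have d0: "\<delta> > 0" unfolding \<delta>_def using e L0 by auto
  show ?thesis
  proof (intro exI[of _ \<delta>] conjI d0 allI impI ballI)
    fix \<psi> lam assume a: "L2T \<psi> \<and> L2norm (\<lambda>x. \<psi> x - \<phi> x) < \<delta>" and lam: "lam \<in> K"
    have q: "L2T \<psi>" using a by auto
    have dl: "L2norm (\<lambda>x. \<psi> x - \<phi> x) < \<delta>" using a by auto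
    have dn: "0 \<le> L2norm (\<lambda>x. \<psi> x - \<phi> x)" by (rule L2norm_nonneg)
    have "IL (\<lambda>x. \<psi> x - \<phi> x) = 2*pi * L2norm (\<lambda>x. \<psi> x - \<phi> x)^2" by (rule IL_L2norm)
    also have "\<dots> \<le> 2*pi * 1"
    proof -
      have "L2norm (\<lambda>x. \<psi> x - \<phi> x) \<le> 1" using dl unfolding \<delta>_def by auto
      then have "L2norm (\<lambda>x. \<psi> x - \<phi> x)^2 \<le> 1" using dn by (simp add: power_le_one)
      then show ?thesis by (intro mult_left_mono) auto
    qed
    finally have Id: "IL (\<lambda>x. \<psi> x - \<phi> x) \<le> 2*pi" by simp
    have "IL \<psi> \<le> integral\<^sup>L (lebesgue_on {0..2*pi}) (\<lambda>x. 2 * (cmod (\<phi> x))^2 + 2 * (cmod (\<psi> x - \<phi> x))^2)"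
      unfolding IL_def
    proof (rule integral_mono)
      show "integrable (lebesgue_on {0..2*pi}) (\<lambda>x. (cmod (\<psi> x))^2)" by (rule L2T_int[OF q])
      show "integrable (lebesgue_on {0..2*pi}) (\<lambda>x. 2 * (cmod (\<phi> x))^2 + 2 * (cmod (\<psi> x - \<phi> x))^2)"
        using L2T_int[OF p] L2T_diff_int[OF q p]
        by (intro Bochner_Integration.integrable_add Bochner_Integration.integrable_mult_right)
      show "(cmod (\<psi> x))^2 \<le> 2 * (cmod (\<phi> x))^2 + 2 * (cmod (\<psi> x - \<phi> x))^2" for x
        using sq_ineq[OF norm_ge_zero norm_triangle_sub[of "\<psi> x" "\<phi> x"] norm_ge_zero norm_ge_zero] .
    qed
    also have "\<dots> = 2 * IL \<phi> + 2 * IL (\<lambda>x. \<psi> x - \<phi> x)"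
      unfolding IL_def using L2T_int[OF p] L2T_diff_int[OF q p] by simp
    also have "\<dots> \<le> M" unfolding M_def using Id by simp
    finally have Mq: "IL \<psi> \<le> M" .
    have Mp: "IL \<phi> \<le> M" unfolding M_def using IL_nonneg[of \<phi>] by simp
    have "cmod (Delta \<psi> lam - Delta \<phi> lam) \<le> L * L2norm (\<lambda>x. \<psi> x - \<phi> x)"
      unfolding L_def by (rule lip_Delta[OF q p Mq Mp B(2)[OF lam]])
    also have "\<dots> \<le> L * \<delta>" using dl L0 by (intro mult_left_mono) auto
    also have "\<dots> \<le> L * (\<epsilon> / (L+1))" unfolding \<delta>_def using L0 by (intro mult_left_mono) auto
    also have "\<dots> < \<epsilon>"
    proof -
      have "L * (\<epsilon> / (L+1)) = \<epsilon> * (L / (L+1))" by simp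
      also have "\<dots> < \<epsilon> * 1" using e L0 by (intro mult_strict_left_mono) auto
      finally show ?thesis by simp
    qed
    finally show "cmod (Delta \<psi> lam - Delta \<phi> lam) < \<epsilon>" .
  qed
qed

theorem lemma3p1:
  shows "(\<forall>(k::nat) (N::real). \<exists>C::real. \<forall>\<phi>\<in>Omega N. \<forall>\<psi>\<in>Omega N.
            sqrt (\<Sum>j\<le>k. (cmod ((deriv ^^ j) (Delta \<phi>) 0 - (deriv ^^ j) (Delta \<psi>) 0))^2)
              \<le> C * L2norm (\<lambda>x. \<phi> x - \<psi> x))
       \<and> (\<forall>\<phi>. L2T \<phi> \<longrightarrow> (\<forall>K::complex set. compact K \<longrightarrow>
            (\<forall>\<epsilon>>0. \<exists>\<delta>>0. \<forall>\<psi>. L2T \<psi> \<and> L2norm (\<lambda>x. \<psi> x - \<phi> x) < \<delta> \<longrightarrow>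
               (\<forall>lam\<in>K. cmod (Delta \<psi> lam - Delta \<phi> lam) < \<epsilon>))))"
  using part1 part2 by blast

end
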